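(* There is an absolute constant $c>0$ such that the following holds. Let $T$ be a directed tree with degree $d\ge 3$ and let $\ell\ge 1$ be the length of a longest directed path in $T$. Then the span of $T$ is at most $c\,(d-1)^{\ell}$; that is, the span of $T$ is in $O((d-1)^\ell)$.
   Context: A directed tree is a DAG (directed acyclic graph) whose underlying undirected graph is a tree. The degree of a vertex is its total number of incident edges; the degree of a graph is the maximum degree of its vertices. The length of a directed path is its number of edges. An upward-planar layered drawing of a DAG $G$ maps each vertex $v$ to a point in the plane whose y-coordinate $y(v)$ is an integer, and each edge $(u,v)$ (directed from tail $u$ to head $v$) to a strictly y-monotone curve going upward from $u$ to $v$ (so $y(u)<y(v)$), such that no two edges intersect except at common endpoints. The span of an edge $(u,v)$ in such a drawing $\Gamma$ is $y(v)-y(u)$; the span of $\Gamma$ is the maximum span of its edges; the span of an upward-planar DAG is the minimum span over all its upward-planar layered drawings (no embedding prescribed). *)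

theory Defs
  imports "HOL-Analysis.Analysis"
begin

text \<open>Directed graphs are given by a vertex set V and an edge set E of ordered pairs (tail, head).\<close>

definition directed_tree :: "'a set \<Rightarrow> ('a \<times> 'a) set \<Rightarrow> bool" where
  "directed_tree V E \<longleftrightarrow>
     finite V \<and> V \<noteq> {} \<and> E \<subseteq> V \<times> V \<and> acyclic E \<and>
     (\<forall>u\<in>V. \<forall>v\<in>V. (u, v) \<in> (E \<union> E\<inverse>)\<^sup>*) \<and>
     card E + 1 = card V"

definition vdegree :: "('a \<times> 'a) set \<Rightarrow> 'a \<Rightarrow> nat" where
  "vdegree E v = card {e \<in> E. fst e = v \<or> snd e = v}"

definition graph_degree :: "'a set \<Rightarrow> ('a \<times> 'a) set \<Rightarrow> nat" where
  "graph_degree V E = Max (vdegree E ` V)"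

definition dpath :: "'a set \<Rightarrow> ('a \<times> 'a) set \<Rightarrow> 'a list \<Rightarrow> bool" where
  "dpath V E p \<longleftrightarrow> p \<noteq> [] \<and> set p \<subseteq> V \<and> (\<forall>i < length p - 1. (p ! i, p ! Suc i) \<in> E)"

definition longest_path_length :: "'a set \<Rightarrow> ('a \<times> 'a) set \<Rightarrow> nat" where
  "longest_path_length V E = Max {length p - 1 | p. dpath V E p}"

definition upward_layered_drawing ::
  "'a set \<Rightarrow> ('a \<times> 'a) set \<Rightarrow> ('a \<Rightarrow> real) \<Rightarrow> ('a \<Rightarrow> int) \<Rightarrow> ('a \<times> 'a \<Rightarrow> real \<Rightarrow> real \<times> real) \<Rightarrow> bool" where
  "upward_layered_drawing V E px py g \<longleftrightarrow>
     inj_on (\<lambda>v. (px v, real_of_int (py v))) V \<and>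
     (\<forall>(u, v) \<in> E.
        path (g (u, v)) \<and>
        pathstart (g (u, v)) = (px u, real_of_int (py u)) \<and>
        pathfinish (g (u, v)) = (px v, real_of_int (py v)) \<and>
        strict_mono_on {0..1} (\<lambda>t. snd (g (u, v) t))) \<and>
     (\<forall>e \<in> E. \<forall>e' \<in> E. e \<noteq> e' \<longrightarrow>
        path_image (g e) \<inter> path_image (g e') \<subseteq>
          (\<lambda>v. (px v, real_of_int (py v))) ` ({fst e, snd e} \<inter> {fst e', snd e'}))"

definition drawing_span :: "('a \<times> 'a) set \<Rightarrow> ('a \<Rightarrow> int) \<Rightarrow> int" where
  "drawing_span E py = Max ((\<lambda>(u, v). py v - py u) ` E)"

definition upward_span :: "'a set \<Rightarrow> ('a \<times> 'a) set \<Rightarrow> nat" where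
  "upward_span V E = (LEAST s::nat. \<exists>px py g.
       upward_layered_drawing V E px py g \<and> drawing_span E py = int s)"

end

theory Submission
  imports Defs
begin

lemma conn_card:
  assumes fE: "finite E" and fV: "finite V" and a: "a \<in> V"
    and conn: "\<forall>v\<in>V. (a, v) \<in> (E \<union> E\<inverse>)\<^sup>*"
  shows "card V \<le> card E + 1"
proof -
  let ?U = "E \<union> E\<inverse>"
  define dist where "dist v = (LEAST n. (a, v) \<in> ?U ^^ n)" for v
  have dist_le: "dist v \<le> n" if "(a, v) \<in> ?U ^^ n" for v n
    using that unfolding dist_def by (rule Least_le)
  have dist_ex: "(a, v) \<in> ?U ^^ dist v" if "v \<in> V" for v
  proof -
    from conn that obtain n where "(a, v) \<in> ?U ^^ n" using rtrancl_power by blast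
    then show ?thesis unfolding dist_def by (rule LeastI)
  qed
  have par: "\<exists>e\<in>E. \<exists>p. (e = (p, v) \<or> e = (v, p)) \<and> dist p < dist v" if "v \<in> V" "v \<noteq> a" for v
  proof -
    have h: "(a, v) \<in> ?U ^^ dist v" using dist_ex that(1) .
    have "dist v \<noteq> 0" using h that(2) by (cases "dist v") auto
    then obtain m where m: "dist v = Suc m" by (cases "dist v") auto
    with h obtain p where p1: "(a, p) \<in> ?U ^^ m" and p2: "(p, v) \<in> ?U" by auto
    have "dist p < dist v" using dist_le[OF p1] m by simp
    with p2 show ?thesis by auto
  qed
  define f where "f v = (SOME e. e \<in> E \<and> (\<exists>p. (e = (p, v) \<or> e = (v, p)) \<and> dist p < dist v))" for v
  have fP: "f v \<in> E \<and> (\<exists>p. (f v = (p, v) \<or> f v = (v, p)) \<and> dist p < dist v)" if "v \<in> V" "v \<noteq> a" for v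
    proof -
    from par[OF that] have "\<exists>e. e \<in> E \<and> (\<exists>p. (e = (p, v) \<or> e = (v, p)) \<and> dist p < dist v)" by blast
    from someI_ex[OF this] show ?thesis unfolding f_def .
  qed
  have inj: "inj_on f (V - {a})"
  proof (rule inj_onI)
    fix v v' assume v: "v \<in> V - {a}" and v': "v' \<in> V - {a}" and eq: "f v = f v'"
    obtain p where p: "(f v = (p, v) \<or> f v = (v, p)) \<and> dist p < dist v" using fP v by auto
    obtain p' where p': "(f v' = (p', v') \<or> f v' = (v', p')) \<and> dist p' < dist v'" using fP v' by auto
    show "v = v'"
    proof (rule ccontr)
      assume "v \<noteq> v'"
      then have "v = p' \<and> v' = p" using p p' eq by auto
      then show False using p p' by simp
    qed
  qed
  have "f ` (V - {a}) \<subseteq> E" using fP by blast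
  then have "card (V - {a}) \<le> card E" using card_inj_on_le[OF inj _ fE] by blast
  then show ?thesis using fV a by (simp add: card_Diff_singleton)
qed

lemma sym_conn: "(x, y) \<in> (F \<union> F\<inverse>)\<^sup>* \<Longrightarrow> (y, x) \<in> (F \<union> F\<inverse>)\<^sup>*"
proof -
  assume "(x, y) \<in> (F \<union> F\<inverse>)\<^sup>*"
  then have "(y, x) \<in> ((F \<union> F\<inverse>)\<inverse>)\<^sup>*" by (simp add: rtrancl_converse)
  moreover have "(F \<union> F\<inverse>)\<inverse> = F \<union> F\<inverse>" by auto
  ultimately show ?thesis by simp
qed

lemma split_tree:
  assumes T: "directed_tree V E" and e0: "(a,b) \<in> E"
  defines "E' \<equiv> E - {(a,b)}"
  defines "Va \<equiv> {v. (a,v) \<in> (E' \<union> E'\<inverse>)\<^sup>*}" and "Vb \<equiv> {v. (b,v) \<in> (E' \<union> E'\<inverse>)\<^sup>*}"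
  defines "Ea \<equiv> {e\<in>E'. fst e \<in> Va}" and "Eb \<equiv> {e\<in>E'. fst e \<in> Vb}"
  shows "directed_tree Va Ea \<and> directed_tree Vb Eb \<and> Va \<inter> Vb = {} \<and> V = Va \<union> Vb \<and>
    E = insert (a,b) (Ea \<union> Eb) \<and> a \<in> Va \<and> b \<in> Vb \<and> Ea \<subseteq> E \<and> Eb \<subseteq> E \<and> (a,b) \<notin> Ea \<union> Eb
    \<and> Ea \<subseteq> Va \<times> Va \<and> Eb \<subseteq> Vb \<times> Vb"
proof -
  let ?U = "E' \<union> E'\<inverse>"
  from T have fV: "finite V" and EV: "E \<subseteq> V \<times> V" and acyc: "acyclic E"
    and conn: "\<forall>u\<in>V. \<forall>v\<in>V. (u, v) \<in> (E \<union> E\<inverse>)\<^sup>*" and cardE: "card E + 1 = card V"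
    unfolding directed_tree_def by auto
  have fE: "finite E" using fV EV finite_subset[OF EV] by blast
  have aV: "a \<in> V" and bV: "b \<in> V" using e0 EV by auto
  have fE': "finite E'" using fE unfolding E'_def by simp
  have cardE': "card E' + 1 = card E" using fE e0 unfolding E'_def
    by (simp add: card_Diff_singleton) (metis Suc_pred card_gt_0_iff empty_iff)
  have closed: "y \<in> V" if "(x, y) \<in> ?U\<^sup>*" "x \<in> V" for x y
    using that(1,2) by (induction rule: rtrancl_induct) (use EV in \<open>auto simp: E'_def\<close>)
  have VaV: "Va \<subseteq> V" and VbV: "Vb \<subseteq> V" using closed aV bV unfolding Va_def Vb_def by auto
  have aVa: "a \<in> Va" and bVb: "b \<in> Vb" unfolding Va_def Vb_def by auto
  have cover: "v \<in> Va \<union> Vb" if "(a, v) \<in> (E \<union> E\<inverse>)\<^sup>*" for v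
    using that
  proof (induction rule: rtrancl_induct)
    case base then show ?case using aVa by simp
  next
    case (step y z)
    show ?case
    proof (cases "(y, z) \<in> ?U")
      case True
      then show ?thesis using step.IH unfolding Va_def Vb_def
        by (auto intro: rtrancl_into_rtrancl)
    next
      case False
      then have "(y, z) = (a, b) \<or> (z, y) = (a, b)" using step.hyps(2) unfolding E'_def by auto
      then show ?thesis using aVa bVb by auto
    qed
  qed
  have Vun: "V = Va \<union> Vb"
  proof
    show "V \<subseteq> Va \<union> Vb" using cover conn aV by blast
    show "Va \<union> Vb \<subseteq> V" using VaV VbV by blast
  qed
  have disj: "Va \<inter> Vb = {}"
  proof (rule ccontr)
    assume "Va \<inter> Vb \<noteq> {}"
    then obtain v where v: "(a, v) \<in> ?U\<^sup>*" "(b, v) \<in> ?U\<^sup>*" unfolding Va_def Vb_def by auto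
    have "(a, b) \<in> ?U\<^sup>*" using v(1) sym_conn[OF v(2)] by (meson rtrancl_trans)
    have "\<forall>v\<in>V. (a, v) \<in> ?U\<^sup>*"
    proof
      fix v assume "v \<in> V"
      then have "v \<in> Va \<or> v \<in> Vb" using Vun by blast
      then show "(a, v) \<in> ?U\<^sup>*"
      proof
        assume "v \<in> Va" then show ?thesis unfolding Va_def by simp
      next
        assume "v \<in> Vb" then have "(b, v) \<in> ?U\<^sup>*" unfolding Vb_def by simp
        with \<open>(a, b) \<in> ?U\<^sup>*\<close> show ?thesis by (rule rtrancl_trans)
      qed
    qed
    from conn_card[OF fE' fV aV this] cardE cardE' show False by simp
  qed
  have Ea_in: "Ea \<subseteq> Va \<times> Va"
  proof
    fix e assume e: "e \<in> Ea"
    then obtain x y where xy: "e = (x, y)" "(x, y) \<in> E'" "x \<in> Va" unfolding Ea_def by (cases e) auto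
    then have "y \<in> Va" unfolding Va_def by (auto intro: rtrancl_into_rtrancl)
    then show "e \<in> Va \<times> Va" using xy by simp
  qed
  have Eb_in: "Eb \<subseteq> Vb \<times> Vb"
  proof
    fix e assume e: "e \<in> Eb"
    then obtain x y where xy: "e = (x, y)" "(x, y) \<in> E'" "x \<in> Vb" unfolding Eb_def by (cases e) auto
    then have "y \<in> Vb" unfolding Vb_def by (auto intro: rtrancl_into_rtrancl)
    then show "e \<in> Vb \<times> Vb" using xy by simp
  qed
  have connA: "(a, v) \<in> (Ea \<union> Ea\<inverse>)\<^sup>*" if "(a, v) \<in> ?U\<^sup>*" for v
    using that
  proof (induction rule: rtrancl_induct)
    case base then show ?case by simp
  next
    case (step y z)
    have yV: "y \<in> Va" using step.hyps(1) unfolding Va_def by simp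
    have zV: "z \<in> Va" using step.hyps unfolding Va_def by (auto intro: rtrancl_into_rtrancl)
    have "(y, z) \<in> Ea \<union> Ea\<inverse>" using step.hyps(2) yV zV unfolding Ea_def by auto
    then show ?case using step.IH by (rule rtrancl_into_rtrancl[rotated])
  qed
  have connB: "(b, v) \<in> (Eb \<union> Eb\<inverse>)\<^sup>*" if "(b, v) \<in> ?U\<^sup>*" for v
    using that
  proof (induction rule: rtrancl_induct)
    case base then show ?case by simp
  next
    case (step y z)
    have yV: "y \<in> Vb" using step.hyps(1) unfolding Vb_def by simp
    have zV: "z \<in> Vb" using step.hyps unfolding Vb_def by (auto intro: rtrancl_into_rtrancl)
    have "(y, z) \<in> Eb \<union> Eb\<inverse>" using step.hyps(2) yV zV unfolding Eb_def by auto
    then show ?case using step.IH by (rule rtrancl_into_rtrancl[rotated])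
  qed
  have fVa: "finite Va" and fVb: "finite Vb" using VaV VbV fV finite_subset by auto
  have fEa: "finite Ea" and fEb: "finite Eb" using fE' unfolding Ea_def Eb_def by auto
  have cA: "card Va \<le> card Ea + 1"
    using conn_card[OF fEa fVa aVa] connA unfolding Va_def by blast
  have cB: "card Vb \<le> card Eb + 1"
    using conn_card[OF fEb fVb bVb] connB unfolding Vb_def by blast
  have E'un: "E' = Ea \<union> Eb" using Vun EV unfolding Ea_def Eb_def E'_def by auto
  have Edisj: "Ea \<inter> Eb = {}" using disj unfolding Ea_def Eb_def by auto
  have cV: "card V = card Va + card Vb" using Vun disj fVa fVb by (simp add: card_Un_disjoint)
  have cE: "card E' = card Ea + card Eb" using E'un Edisj fEa fEb by (simp add: card_Un_disjoint)
  have eqA: "card Ea + 1 = card Va" and eqB: "card Eb + 1 = card Vb"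
    using cA cB cV cE cardE cardE' by linarith+
  have acA: "acyclic Ea" and acB: "acyclic Eb"
    using acyc by (rule acyclic_subset, auto simp: Ea_def Eb_def E'_def)+
  have connA2: "\<forall>u\<in>Va. \<forall>v\<in>Va. (u, v) \<in> (Ea \<union> Ea\<inverse>)\<^sup>*"
  proof (intro ballI)
    fix u v assume "u \<in> Va" "v \<in> Va"
    then have "(a, u) \<in> (Ea \<union> Ea\<inverse>)\<^sup>*" "(a, v) \<in> (Ea \<union> Ea\<inverse>)\<^sup>*" using connA unfolding Va_def by auto
    then show "(u, v) \<in> (Ea \<union> Ea\<inverse>)\<^sup>*" using sym_conn rtrancl_trans by metis
  qed
  have connB2: "\<forall>u\<in>Vb. \<forall>v\<in>Vb. (u, v) \<in> (Eb \<union> Eb\<inverse>)\<^sup>*"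
  proof (intro ballI)
    fix u v assume "u \<in> Vb" "v \<in> Vb"
    then have "(b, u) \<in> (Eb \<union> Eb\<inverse>)\<^sup>*" "(b, v) \<in> (Eb \<union> Eb\<inverse>)\<^sup>*" using connB unfolding Vb_def by auto
    then show "(u, v) \<in> (Eb \<union> Eb\<inverse>)\<^sup>*" using sym_conn rtrancl_trans by metis
  qed
  have "directed_tree Va Ea" unfolding directed_tree_def
    using fVa aVa Ea_in acA connA2 eqA by auto
  moreover have "directed_tree Vb Eb" unfolding directed_tree_def
    using fVb bVb Eb_in acB connB2 eqB by auto
  moreover have "E = insert (a,b) (Ea \<union> Eb)" using E'un e0 unfolding E'_def by auto
  moreover have "(a,b) \<notin> Ea \<union> Eb" unfolding Ea_def Eb_def E'_def by auto
  moreover have "Ea \<subseteq> E" "Eb \<subseteq> E" unfolding Ea_def Eb_def E'_def by auto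
  ultimately show ?thesis using disj Vun aVa bVb Ea_in Eb_in by blast
qed


definition Pt :: "('a \<Rightarrow> real) \<Rightarrow> ('a \<Rightarrow> int) \<Rightarrow> 'a \<Rightarrow> real \<times> real" where
  "Pt px py v = (px v, real_of_int (py v))"

definition dset :: "'a set \<Rightarrow> ('a \<times> 'a) set \<Rightarrow> ('a \<Rightarrow> real) \<Rightarrow> ('a \<Rightarrow> int) \<Rightarrow> ('a \<times> 'a \<Rightarrow> real \<Rightarrow> real \<times> real) \<Rightarrow> (real \<times> real) set" where
  "dset V E px py g = Pt px py ` V \<union> (\<Union>e\<in>E. path_image (g e))"

definition onv :: "'a set \<Rightarrow> ('a \<times> 'a) set \<Rightarrow> ('a \<Rightarrow> real) \<Rightarrow> ('a \<Rightarrow> int) \<Rightarrow> ('a \<times> 'a \<Rightarrow> real \<Rightarrow> real \<times> real) \<Rightarrow> bool" where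
  "onv V E px py g = (\<forall>e\<in>E. \<forall>v\<in>V. Pt px py v \<in> path_image (g e) \<longrightarrow> v = fst e \<or> v = snd e)"

lemma uld_Pt: "upward_layered_drawing V E px py g \<longleftrightarrow>
     inj_on (Pt px py) V \<and>
     (\<forall>(u, v) \<in> E.
        path (g (u, v)) \<and>
        pathstart (g (u, v)) = Pt px py u \<and>
        pathfinish (g (u, v)) = Pt px py v \<and>
        strict_mono_on {0..1} (\<lambda>t. snd (g (u, v) t))) \<and>
     (\<forall>e \<in> E. \<forall>e' \<in> E. e \<noteq> e' \<longrightarrow>
        path_image (g e) \<inter> path_image (g e') \<subseteq> Pt px py ` ({fst e, snd e} \<inter> {fst e', snd e'}))"
proof -
  have "Pt px py = (\<lambda>v. (px v, real_of_int (py v)))" by (rule ext) (simp add: Pt_def)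
  then show ?thesis unfolding upward_layered_drawing_def by simp
qed

lemma translate:
  fixes X :: real and Y :: int
  assumes D: "upward_layered_drawing V E px py g" and O: "onv V E px py g"
  defines "\<tau> \<equiv> (\<lambda>p::real\<times>real. p + (X, real_of_int Y))"
  shows "upward_layered_drawing V E (\<lambda>v. px v + X) (\<lambda>v. py v + Y) (\<lambda>e t. \<tau> (g e t))"
    "onv V E (\<lambda>v. px v + X) (\<lambda>v. py v + Y) (\<lambda>e t. \<tau> (g e t))"
    "dset V E (\<lambda>v. px v + X) (\<lambda>v. py v + Y) (\<lambda>e t. \<tau> (g e t)) = \<tau> ` dset V E px py g"
proof -
  have injt: "inj \<tau>" unfolding \<tau>_def by (rule injI) simp
  have Pt': "Pt (\<lambda>v. px v + X) (\<lambda>v. py v + Y) v = \<tau> (Pt px py v)" for v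
    unfolding Pt_def \<tau>_def by simp
  have PI: "path_image (\<lambda>t. \<tau> (g e t)) = \<tau> ` path_image (g e)" for e
    unfolding path_image_def by auto
  have PP: "path (\<lambda>t. \<tau> (g e t))" if "path (g e)" for e
    using that unfolding path_def \<tau>_def by (intro continuous_intros) auto
  have D1: "inj_on (Pt px py) V" and D2: "\<forall>(u, v) \<in> E.
        path (g (u, v)) \<and> pathstart (g (u, v)) = Pt px py u \<and> pathfinish (g (u, v)) = Pt px py v \<and>
        strict_mono_on {0..1} (\<lambda>t. snd (g (u, v) t))"
    and D3: "\<forall>e \<in> E. \<forall>e' \<in> E. e \<noteq> e' \<longrightarrow>
        path_image (g e) \<inter> path_image (g e') \<subseteq> Pt px py ` ({fst e, snd e} \<inter> {fst e', snd e'})"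
    using D unfolding uld_Pt by auto
  show "upward_layered_drawing V E (\<lambda>v. px v + X) (\<lambda>v. py v + Y) (\<lambda>e t. \<tau> (g e t))"
    unfolding uld_Pt
  proof (intro conjI)
    show "inj_on (Pt (\<lambda>v. px v + X) (\<lambda>v. py v + Y)) V"
      using D1 injt unfolding Pt' inj_on_def by blast
    show "\<forall>(u, v)\<in>E. path (\<lambda>t. \<tau> (g (u, v) t)) \<and>
        pathstart (\<lambda>t. \<tau> (g (u, v) t)) = Pt (\<lambda>v. px v + X) (\<lambda>v. py v + Y) u \<and>
        pathfinish (\<lambda>t. \<tau> (g (u, v) t)) = Pt (\<lambda>v. px v + X) (\<lambda>v. py v + Y) v \<and>
        strict_mono_on {0..1} (\<lambda>t. snd (\<tau> (g (u, v) t)))"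
    proof (clarify, intro conjI)
      fix u v assume uv: "(u, v) \<in> E"
      then show "path (\<lambda>t. \<tau> (g (u, v) t))" using D2 PP by auto
      show "pathstart (\<lambda>t. \<tau> (g (u, v) t)) = Pt (\<lambda>v. px v + X) (\<lambda>v. py v + Y) u"
        using D2 uv unfolding Pt' pathstart_def by auto
      show "pathfinish (\<lambda>t. \<tau> (g (u, v) t)) = Pt (\<lambda>v. px v + X) (\<lambda>v. py v + Y) v"
        using D2 uv unfolding Pt' pathfinish_def by auto
      have "strict_mono_on {0..1} (\<lambda>t. snd (g (u, v) t))" using D2 uv by auto
      then show "strict_mono_on {0..1} (\<lambda>t. snd (\<tau> (g (u, v) t)))"
        unfolding strict_mono_on_def \<tau>_def by auto
    qed
    show "\<forall>e\<in>E. \<forall>e'\<in>E. e \<noteq> e' \<longrightarrow>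
      path_image (\<lambda>t. \<tau> (g e t)) \<inter> path_image (\<lambda>t. \<tau> (g e' t))
      \<subseteq> Pt (\<lambda>v. px v + X) (\<lambda>v. py v + Y) ` ({fst e, snd e} \<inter> {fst e', snd e'})"
    proof (intro ballI impI)
      fix e e' assume "e \<in> E" "e' \<in> E" "e \<noteq> e'"
      then have "path_image (g e) \<inter> path_image (g e') \<subseteq> Pt px py ` ({fst e, snd e} \<inter> {fst e', snd e'})"
        using D3 by auto
      then have "\<tau> ` (path_image (g e) \<inter> path_image (g e')) \<subseteq> \<tau> ` Pt px py ` ({fst e, snd e} \<inter> {fst e', snd e'})"
        by (rule image_mono)
      then show "path_image (\<lambda>t. \<tau> (g e t)) \<inter> path_image (\<lambda>t. \<tau> (g e' t))
      \<subseteq> Pt (\<lambda>v. px v + X) (\<lambda>v. py v + Y) ` ({fst e, snd e} \<inter> {fst e', snd e'})"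
        unfolding PI image_Int[OF injt, symmetric] image_image Pt' by simp
    qed
  qed
  show "onv V E (\<lambda>v. px v + X) (\<lambda>v. py v + Y) (\<lambda>e t. \<tau> (g e t))"
    using O injt unfolding onv_def PI Pt' by (auto simp: inj_image_mem_iff)
  show "dset V E (\<lambda>v. px v + X) (\<lambda>v. py v + Y) (\<lambda>e t. \<tau> (g e t)) = \<tau> ` dset V E px py g"
    unfolding dset_def PI Pt' image_Un image_UN by (simp add: image_image)
qed

lemma glue:
  fixes \<gamma> :: "real \<Rightarrow> real \<times> real"
  assumes D1: "upward_layered_drawing V1 E1 px1 py1 g1" and O1: "onv V1 E1 px1 py1 g1"
    and D2: "upward_layered_drawing V2 E2 px2 py2 g2" and O2: "onv V2 E2 px2 py2 g2"
    and disjV: "V1 \<inter> V2 = {}" and E1V: "E1 \<subseteq> V1 \<times> V1" and E2V: "E2 \<subseteq> V2 \<times> V2"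
    and disjD: "dset V1 E1 px1 py1 g1 \<inter> dset V2 E2 px2 py2 g2 = {}"
    and x1: "x1 \<in> V1" and x2: "x2 \<in> V2" and e0: "e0 = (x1, x2) \<or> e0 = (x2, x1)"
  defines "px \<equiv> (\<lambda>v. if v \<in> V1 then px1 v else px2 v)"
    and "py \<equiv> (\<lambda>v. if v \<in> V1 then py1 v else py2 v)"
    and "g \<equiv> (\<lambda>e. if e = e0 then \<gamma> else if e \<in> E1 then g1 e else g2 e)"
  assumes gp: "path \<gamma>" and gs: "pathstart \<gamma> = Pt px py (fst e0)" and gf: "pathfinish \<gamma> = Pt px py (snd e0)"
    and gm: "strict_mono_on {0..1} (\<lambda>t. snd (\<gamma> t))"
    and gi1: "path_image \<gamma> \<inter> dset V1 E1 px1 py1 g1 \<subseteq> {Pt px1 py1 x1}"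
    and gi2: "path_image \<gamma> \<inter> dset V2 E2 px2 py2 g2 \<subseteq> {Pt px2 py2 x2}"
  shows "upward_layered_drawing (V1 \<union> V2) (insert e0 (E1 \<union> E2)) px py g"
    "onv (V1 \<union> V2) (insert e0 (E1 \<union> E2)) px py g"
    "dset (V1 \<union> V2) (insert e0 (E1 \<union> E2)) px py g = dset V1 E1 px1 py1 g1 \<union> dset V2 E2 px2 py2 g2 \<union> path_image \<gamma>"
proof -
  let ?D1 = "dset V1 E1 px1 py1 g1" and ?D2 = "dset V2 E2 px2 py2 g2"
  have P1: "Pt px py v = Pt px1 py1 v" if "v \<in> V1" for v using that unfolding Pt_def px_def py_def by simp
  have P2: "Pt px py v = Pt px2 py2 v" if "v \<in> V2" for v using that disjV unfolding Pt_def px_def py_def by auto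
  have e0n: "e0 \<notin> E1" "e0 \<notin> E2" using e0 E1V E2V x1 x2 disjV by auto
  have g0: "g e0 = \<gamma>" unfolding g_def by simp
  have gE1: "g e = g1 e" if "e \<in> E1" for e using that e0n unfolding g_def by auto
  have gE2: "g e = g2 e" if "e \<in> E2" for e using that e0n disjV E1V E2V unfolding g_def by (auto split: if_splits)
  have inD1: "path_image (g1 e) \<subseteq> ?D1" if "e \<in> E1" for e using that unfolding dset_def by auto
  have inD2: "path_image (g2 e) \<subseteq> ?D2" if "e \<in> E2" for e using that unfolding dset_def by auto
  have vD1: "Pt px1 py1 v \<in> ?D1" if "v \<in> V1" for v using that unfolding dset_def by auto
  have vD2: "Pt px2 py2 v \<in> ?D2" if "v \<in> V2" for v using that unfolding dset_def by auto
  from D1 have D1a: "inj_on (Pt px1 py1) V1" and D1b: "\<forall>(u, v) \<in> E1.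
        path (g1 (u, v)) \<and> pathstart (g1 (u, v)) = Pt px1 py1 u \<and> pathfinish (g1 (u, v)) = Pt px1 py1 v \<and>
        strict_mono_on {0..1} (\<lambda>t. snd (g1 (u, v) t))"
    and D1c: "\<forall>e \<in> E1. \<forall>e' \<in> E1. e \<noteq> e' \<longrightarrow>
        path_image (g1 e) \<inter> path_image (g1 e') \<subseteq> Pt px1 py1 ` ({fst e, snd e} \<inter> {fst e', snd e'})"
    unfolding uld_Pt by auto
  from D2 have D2a: "inj_on (Pt px2 py2) V2" and D2b: "\<forall>(u, v) \<in> E2.
        path (g2 (u, v)) \<and> pathstart (g2 (u, v)) = Pt px2 py2 u \<and> pathfinish (g2 (u, v)) = Pt px2 py2 v \<and>
        strict_mono_on {0..1} (\<lambda>t. snd (g2 (u, v) t))"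
    and D2c: "\<forall>e \<in> E2. \<forall>e' \<in> E2. e \<noteq> e' \<longrightarrow>
        path_image (g2 e) \<inter> path_image (g2 e') \<subseteq> Pt px2 py2 ` ({fst e, snd e} \<inter> {fst e', snd e'})"
    unfolding uld_Pt by auto
  have inj: "inj_on (Pt px py) (V1 \<union> V2)"
  proof (rule inj_onI)
    fix u v assume u: "u \<in> V1 \<union> V2" and v: "v \<in> V1 \<union> V2" and eq: "Pt px py u = Pt px py v"
    show "u = v"
    proof (cases "u \<in> V1")
      case True
      show ?thesis
      proof (cases "v \<in> V1")
        case True
        then show ?thesis using \<open>u \<in> V1\<close> eq P1 D1a by (metis inj_onD)
      next
        case False
        then have "v \<in> V2" using v by auto
        then show ?thesis using \<open>u \<in> V1\<close> eq P1 P2 vD1 vD2 disjD by (metis disjoint_iff)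
      qed
    next
      case False
      then have u2: "u \<in> V2" using u by auto
      show ?thesis
      proof (cases "v \<in> V1")
        case True
        then show ?thesis using u2 eq P1 P2 vD1 vD2 disjD by (metis disjoint_iff)
      next
        case False
        then have "v \<in> V2" using v by auto
        then show ?thesis using u2 eq P2 D2a by (metis inj_onD)
      qed
    qed
  qed
  have E1e: "fst e \<in> V1 \<and> snd e \<in> V1" if "e \<in> E1" for e using that E1V by auto
  have E2e: "fst e \<in> V2 \<and> snd e \<in> V2" if "e \<in> E2" for e using that E2V by auto
  have gi1': "p = Pt px py x1" if "p \<in> path_image \<gamma>" "p \<in> ?D1" for p using that gi1 P1 x1 by auto
  have gi2': "p = Pt px py x2" if "p \<in> path_image \<gamma>" "p \<in> ?D2" for p using that gi2 P2 x2 by auto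
  have x1e: "x1 \<in> {fst e0, snd e0}" and x2e: "x2 \<in> {fst e0, snd e0}" using e0 by auto
  show "upward_layered_drawing (V1 \<union> V2) (insert e0 (E1 \<union> E2)) px py g"
    unfolding uld_Pt
  proof (intro conjI inj)
    show "\<forall>(u, v)\<in>insert e0 (E1 \<union> E2). path (g (u, v)) \<and> pathstart (g (u, v)) = Pt px py u \<and>
      pathfinish (g (u, v)) = Pt px py v \<and> strict_mono_on {0..1} (\<lambda>t. snd (g (u, v) t))"
    proof (clarify)
      fix u v assume uv: "(u, v) \<in> insert e0 (E1 \<union> E2)"
      show "path (g (u, v)) \<and> pathstart (g (u, v)) = Pt px py u \<and>
      pathfinish (g (u, v)) = Pt px py v \<and> strict_mono_on {0..1} (\<lambda>t. snd (g (u, v) t))"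
      proof (cases "(u, v) = e0")
        case True
        then show ?thesis using gp gs gf gm g0 by (metis fst_conv snd_conv)
      next
        case False
        then have "(u, v) \<in> E1 \<or> (u, v) \<in> E2" using uv by auto
        then show ?thesis
        proof
          assume h: "(u, v) \<in> E1"
          then show ?thesis using D1b gE1[OF h] P1 E1e[OF h] by auto
        next
          assume h: "(u, v) \<in> E2"
          then show ?thesis using D2b gE2[OF h] P2 E2e[OF h] by auto
        qed
      qed
    qed
    show "\<forall>e\<in>insert e0 (E1 \<union> E2). \<forall>e'\<in>insert e0 (E1 \<union> E2). e \<noteq> e' \<longrightarrow>
      path_image (g e) \<inter> path_image (g e') \<subseteq> Pt px py ` ({fst e, snd e} \<inter> {fst e', snd e'})"
    proof (intro ballI impI subsetI)
      fix e e' p assume e: "e \<in> insert e0 (E1 \<union> E2)" and e': "e' \<in> insert e0 (E1 \<union> E2)"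
        and ne: "e \<noteq> e'" and p: "p \<in> path_image (g e) \<inter> path_image (g e')"
      have c0: "p \<in> Pt px py ` ({fst a, snd a} \<inter> {fst b, snd b})"
        if a: "a = e0" and b: "b \<in> E1 \<union> E2" and pa: "p \<in> path_image (g a)" and pb: "p \<in> path_image (g b)" for a b
      proof -
        from b show ?thesis
        proof
          assume b1: "b \<in> E1"
          then have "p \<in> ?D1" using pb gE1[OF b1] inD1[OF b1] by auto
          then have pe: "p = Pt px py x1" using gi1' pa a g0 by auto
          then have "Pt px1 py1 x1 \<in> path_image (g1 b)" using pb gE1[OF b1] P1 x1 by auto
          then have "x1 = fst b \<or> x1 = snd b" using O1 b1 x1 unfolding onv_def by auto
          then show ?thesis using pe x1e a by auto
        next
          assume b2: "b \<in> E2"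
          then have "p \<in> ?D2" using pb gE2[OF b2] inD2[OF b2] by auto
          then have pe: "p = Pt px py x2" using gi2' pa a g0 by auto
          then have "Pt px2 py2 x2 \<in> path_image (g2 b)" using pb gE2[OF b2] P2 x2 by auto
          then have "x2 = fst b \<or> x2 = snd b" using O2 b2 x2 unfolding onv_def by auto
          then show ?thesis using pe x2e a by auto
        qed
      qed
      show "p \<in> Pt px py ` ({fst e, snd e} \<inter> {fst e', snd e'})"
      proof (cases "e = e0")
        case True
        then have "e' \<in> E1 \<union> E2" using e' ne by auto
        then show ?thesis using c0[OF True] p by auto
      next
        case False
        note eF = False
        show ?thesis
        proof (cases "e' = e0")
          case True
          then have "e \<in> E1 \<union> E2" using e eF by auto
          then have "p \<in> Pt px py ` ({fst e', snd e'} \<inter> {fst e, snd e})" using c0[OF True] p by auto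
          then show ?thesis by (simp add: Int_commute)
        next
          case False
          have ee: "e \<in> E1 \<union> E2" "e' \<in> E1 \<union> E2" using e e' eF False by auto
          show ?thesis
          proof (cases "e \<in> E1")
            case True
            note eE1 = True
            show ?thesis
            proof (cases "e' \<in> E1")
              case True
              have "p \<in> path_image (g1 e) \<inter> path_image (g1 e')" using p gE1[OF eE1] gE1[OF True] by simp
              then have "p \<in> Pt px1 py1 ` ({fst e, snd e} \<inter> {fst e', snd e'})"
                using D1c[rule_format, OF eE1 True ne] by blast
              moreover have "Pt px1 py1 ` ({fst e, snd e} \<inter> {fst e', snd e'}) = Pt px py ` ({fst e, snd e} \<inter> {fst e', snd e'})"
                by (rule image_cong[OF refl]) (use P1 E1e[OF eE1] in auto)
              ultimately show ?thesis by simp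
            next
              case False
              then have e'2: "e' \<in> E2" using ee by auto
              have "p \<in> path_image (g1 e)" "p \<in> path_image (g2 e')" using p gE1[OF eE1] gE2[OF e'2] by auto
              then have "p \<in> ?D1 \<inter> ?D2" using inD1[OF eE1] inD2[OF e'2] by blast
              then show ?thesis using disjD by auto
            qed
          next
            case False
            then have eE2: "e \<in> E2" using ee by auto
            show ?thesis
            proof (cases "e' \<in> E1")
              case True
              have "p \<in> path_image (g2 e)" "p \<in> path_image (g1 e')" using p gE1[OF True] gE2[OF eE2] by auto
              then have "p \<in> ?D1 \<inter> ?D2" using inD1[OF True] inD2[OF eE2] by blast
              then show ?thesis using disjD by auto
            next
              case False
              then have e'2: "e' \<in> E2" using ee by auto
              have "p \<in> path_image (g2 e) \<inter> path_image (g2 e')" using p gE2[OF eE2] gE2[OF e'2] by simp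
              then have "p \<in> Pt px2 py2 ` ({fst e, snd e} \<inter> {fst e', snd e'})"
                using D2c[rule_format, OF eE2 e'2 ne] by blast
              moreover have "Pt px2 py2 ` ({fst e, snd e} \<inter> {fst e', snd e'}) = Pt px py ` ({fst e, snd e} \<inter> {fst e', snd e'})"
                by (rule image_cong[OF refl]) (use P2 E2e[OF eE2] in auto)
              ultimately show ?thesis by simp
            qed
          qed
        qed
      qed
    qed
  qed
  show "onv (V1 \<union> V2) (insert e0 (E1 \<union> E2)) px py g"
    unfolding onv_def
  proof (intro ballI impI)
    fix e v assume e: "e \<in> insert e0 (E1 \<union> E2)" and v: "v \<in> V1 \<union> V2" and pv: "Pt px py v \<in> path_image (g e)"
    show "v = fst e \<or> v = snd e"
    proof (cases "e = e0")
      case True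
      show ?thesis
      proof (cases "v \<in> V1")
        case vv: True
        then have "Pt px py v = Pt px py x1" using gi1' pv True g0 vD1 P1 by auto
        then have "v = x1" using inj vv x1 by (auto dest: inj_onD)
        then show ?thesis using x1e True by auto
      next
        case False
        then have vv: "v \<in> V2" using v by auto
        then have "Pt px py v = Pt px py x2" using gi2' pv True g0 vD2 P2 by auto
        then have "v = x2" using inj vv x2 by (auto dest: inj_onD)
        then show ?thesis using x2e True by auto
      qed
    next
      case False
      then have "e \<in> E1 \<or> e \<in> E2" using e by auto
      then show ?thesis
      proof
        assume eE: "e \<in> E1"
        show ?thesis
        proof (cases "v \<in> V1")
          case True then show ?thesis using O1 eE pv gE1 P1 unfolding onv_def by auto
        next
          case False
          then have "v \<in> V2" using v by auto
          then have "Pt px py v \<in> ?D1 \<inter> ?D2" using pv gE1[OF eE] inD1[OF eE] vD2 P2 by auto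
          then show ?thesis using disjD by auto
        qed
      next
        assume eE: "e \<in> E2"
        show ?thesis
        proof (cases "v \<in> V2")
          case True then show ?thesis using O2 eE pv gE2 P2 unfolding onv_def by auto
        next
          case False
          then have "v \<in> V1" using v by auto
          then have "Pt px py v \<in> ?D1 \<inter> ?D2" using pv gE2[OF eE] inD2[OF eE] vD1 P1 by auto
          then show ?thesis using disjD by auto
        qed
      qed
    qed
  qed
  have "Pt px py ` (V1 \<union> V2) = Pt px1 py1 ` V1 \<union> Pt px2 py2 ` V2" using P1 P2 by (auto simp: image_Un)
  moreover have "(\<Union>e\<in>insert e0 (E1 \<union> E2). path_image (g e)) =
     path_image \<gamma> \<union> (\<Union>e\<in>E1. path_image (g1 e)) \<union> (\<Union>e\<in>E2. path_image (g2 e))"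
    using g0 gE1 gE2 by auto
  ultimately show "dset (V1 \<union> V2) (insert e0 (E1 \<union> E2)) px py g = ?D1 \<union> ?D2 \<union> path_image \<gamma>"
    unfolding dset_def by auto
qed


lemma seg_coords:
  fixes A B :: "real \<times> real"
  assumes "p \<in> closed_segment A B"
  obtains u where "0 \<le> u" "u \<le> 1" "fst p = (1-u) * fst A + u * fst B" "snd p = (1-u) * snd A + u * snd B"
  using assms unfolding closed_segment_def by auto

lemma poly2:
  fixes A B C :: "real \<times> real"
  assumes ab: "snd A < snd B" and bc: "snd B < snd C"
  shows "path (linepath A B +++ linepath B C)" "pathstart (linepath A B +++ linepath B C) = A"
    "pathfinish (linepath A B +++ linepath B C) = C"
    "strict_mono_on {0..1} (\<lambda>t. snd ((linepath A B +++ linepath B C) t))"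
    "path_image (linepath A B +++ linepath B C) = closed_segment A B \<union> closed_segment B C"
proof -
  show "path (linepath A B +++ linepath B C)" by (simp add: path_join)
  show "pathstart (linepath A B +++ linepath B C) = A" by simp
  show "pathfinish (linepath A B +++ linepath B C) = C" by simp
  show "path_image (linepath A B +++ linepath B C) = closed_segment A B \<union> closed_segment B C"
    by (simp add: path_image_join)
  have s1: "snd (linepath A B u) = snd A + u * (snd B - snd A)" for u
    unfolding linepath_def by (simp add: algebra_simps)
  have s2: "snd (linepath B C u) = snd B + u * (snd C - snd B)" for u
    unfolding linepath_def by (simp add: algebra_simps)
  show "strict_mono_on {0..1} (\<lambda>t. snd ((linepath A B +++ linepath B C) t))"
  proof (rule strict_mono_onI)
    fix s t :: real assume s: "s \<in> {0..1}" and t: "t \<in> {0..1}" and st: "s < t"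
    show "snd ((linepath A B +++ linepath B C) s) < snd ((linepath A B +++ linepath B C) t)"
    proof (cases "t \<le> 1/2")
      case True
      then have "s \<le> 1/2" using st by simp
      have "snd A + (2 * s) * (snd B - snd A) < snd A + (2 * t) * (snd B - snd A)"
        using st ab by (intro add_strict_left_mono mult_strict_right_mono) auto
      then show ?thesis using True \<open>s \<le> 1/2\<close> by (simp add: joinpaths_def s1)
    next
      case False
      note tF = False
      show ?thesis
      proof (cases "s \<le> 1/2")
        case True
        have "snd A + (2 * s) * (snd B - snd A) \<le> snd A + 1 * (snd B - snd A)"
          using True ab by (intro add_left_mono mult_right_mono) auto
        moreover have "snd B + 0 * (snd C - snd B) < snd B + (2 * t - 1) * (snd C - snd B)"
          using tF bc by (intro add_strict_left_mono mult_strict_right_mono) auto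
        ultimately show ?thesis using True tF by (simp add: joinpaths_def s1 s2)
      next
        case False
        have "snd B + (2 * s - 1) * (snd C - snd B) < snd B + (2 * t - 1) * (snd C - snd B)"
          using st bc by (intro add_strict_left_mono mult_strict_right_mono) auto
        then show ?thesis using tF False by (simp add: joinpaths_def s2)
      qed
    qed
  qed
qed


lemma step_down_geo:
  fixes L1 L2 :: nat and W1 W2 \<mu>1 :: real and r w :: 'a
  assumes D1: "upward_layered_drawing V1 E1 px1 py1 g1" and O1: "onv V1 E1 px1 py1 g1"
    and r1: "r \<in> V1" "px1 r = 0" "py1 r = 0" and mu1: "\<mu>1 > 0"
    and R1: "\<forall>p\<in>dset V1 E1 px1 py1 g1. 0 \<le> fst p \<and> fst p \<le> W1 \<and> (fst p = 0 \<longrightarrow> p = (0,0)) \<and>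
               - real L1 \<le> snd p \<and> (snd p < 0 \<longrightarrow> \<mu>1 * (- snd p) \<le> fst p)"
    and D2: "upward_layered_drawing V2 E2 px2 py2 g2" and O2: "onv V2 E2 px2 py2 g2"
    and w2: "w \<in> V2" "px2 w = 0" "py2 w = 0"
    and R2: "\<forall>p\<in>dset V2 E2 px2 py2 g2. 0 \<le> fst p \<and> fst p \<le> W2 \<and> (fst p = 0 \<longrightarrow> p = (0,0)) \<and>
               - real L2 \<le> snd p"
    and disjV: "V1 \<inter> V2 = {}" and E1V: "E1 \<subseteq> V1 \<times> V1" and E2V: "E2 \<subseteq> V2 \<times> V2"
  shows "\<exists>px py g W \<mu>. upward_layered_drawing (V1 \<union> V2) (insert (w,r) (E1 \<union> E2)) px py g \<and>
     onv (V1 \<union> V2) (insert (w,r) (E1 \<union> E2)) px py g \<and> px r = 0 \<and> py r = 0 \<and> \<mu> > 0 \<and>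
     (\<forall>p\<in>dset (V1 \<union> V2) (insert (w,r) (E1 \<union> E2)) px py g. 0 \<le> fst p \<and> fst p \<le> W \<and>
        (fst p = 0 \<longrightarrow> p = (0,0)) \<and> - real (L1 + 1 + L2) \<le> snd p \<and> (snd p < 0 \<longrightarrow> \<mu> * (- snd p) \<le> fst p)) \<and>
     (\<forall>v\<in>V1. py v = py1 v) \<and> (\<forall>v\<in>V2. py v = py2 v - int (L1 + 1))"
proof -
  define X where "X = W1 + 1"
  define Y :: int where "Y = - int (L1 + 1)"
  define \<tau> where "\<tau> = (\<lambda>p::real\<times>real. p + (X, real_of_int Y))"
  define px2' where "px2' = (\<lambda>v. px2 v + X)"
  define py2' where "py2' = (\<lambda>v. py2 v + Y)"
  define g2' where "g2' = (\<lambda>e t. \<tau> (g2 e t))"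
  have D2': "upward_layered_drawing V2 E2 px2' py2' g2'" and O2': "onv V2 E2 px2' py2' g2'"
    and DS2: "dset V2 E2 px2' py2' g2' = \<tau> ` dset V2 E2 px2 py2 g2"
    using translate[OF D2 O2, of X Y] unfolding px2'_def py2'_def g2'_def \<tau>_def by auto
  have W1: "0 \<le> W1" using R1 r1 unfolding dset_def Pt_def by force
  have W2: "0 \<le> W2" using R2 w2 unfolding dset_def Pt_def by force
  have X1: "1 \<le> X" unfolding X_def using W1 by simp
  define \<epsilon> where "\<epsilon> = min (1/2) (\<mu>1 * (real L1 + 1/2) / 2)"
  have eps0: "0 < \<epsilon>" unfolding \<epsilon>_def using mu1 by simp
  have eps1: "\<epsilon> \<le> 1/2" unfolding \<epsilon>_def by simp
  have m0: "0 < \<mu>1 * (real L1 + 1/2)" using mu1 by (simp add: add_nonneg_pos)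
  have "\<epsilon> \<le> \<mu>1 * (real L1 + 1/2) / 2" unfolding \<epsilon>_def by simp
  then have eps2: "\<epsilon> < \<mu>1 * (real L1 + 1/2)" using m0 by linarith
  define A where "A = (X, real_of_int Y)"
  define B where "B = (\<epsilon>, real_of_int Y + 1/2)"
  define Og where "Og = ((0::real), (0::real))"
  define \<gamma> where "\<gamma> = linepath A B +++ linepath B Og"
  have Yv: "real_of_int Y = - real L1 - 1" unfolding Y_def by simp
  have pg: "path \<gamma>" "pathstart \<gamma> = A" "pathfinish \<gamma> = Og" "strict_mono_on {0..1} (\<lambda>t. snd (\<gamma> t))"
    "path_image \<gamma> = closed_segment A B \<union> closed_segment B Og"
    using poly2[of A B Og] Yv unfolding \<gamma>_def A_def B_def Og_def by auto
  let ?D1 = "dset V1 E1 px1 py1 g1" and ?D2 = "dset V2 E2 px2' py2' g2'"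
  have inD2: "X \<le> fst q \<and> fst q \<le> X + W2 \<and> (fst q = X \<longrightarrow> q = A) \<and> real_of_int Y - real L2 \<le> snd q" if "q \<in> ?D2" for q
  proof -
    from that obtain q0 where q0: "q0 \<in> dset V2 E2 px2 py2 g2" "q = \<tau> q0" using DS2 by auto
    then show ?thesis using R2 unfolding \<tau>_def A_def by (cases q0) auto
  qed
  have P1r: "Pt px1 py1 r = Og" unfolding Pt_def Og_def using r1 by simp
  have P2w: "Pt px2' py2' w = A" unfolding Pt_def A_def px2'_def py2'_def using w2 by simp
  have disjD: "?D1 \<inter> ?D2 = {}"
  proof -
    { fix q assume "q \<in> ?D1" "q \<in> ?D2"
      then have False using R1 inD2 unfolding X_def by fastforce }
    then show ?thesis by blast
  qed
  have gi1: "path_image \<gamma> \<inter> ?D1 \<subseteq> {Pt px1 py1 r}"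
  proof
    fix p assume p: "p \<in> path_image \<gamma> \<inter> ?D1"
    then have R1p: "0 \<le> fst p" "fst p = 0 \<longrightarrow> p = (0,0)" "- real L1 \<le> snd p" "snd p < 0 \<longrightarrow> \<mu>1 * (- snd p) \<le> fst p"
      using R1 by auto
    from p have "p \<in> closed_segment A B \<or> p \<in> closed_segment B Og" using pg by auto
    then show "p \<in> {Pt px1 py1 r}"
    proof
      assume "p \<in> closed_segment A B"
      then obtain u where u: "0 \<le> u" "u \<le> 1" "snd p = (1-u) * snd A + u * snd B" by (rule seg_coords)
      have "snd p = real_of_int Y + u/2" using u unfolding A_def B_def by (simp add: algebra_simps)
      then have "snd p \<le> real_of_int Y + 1/2" using u by simp
      then show ?thesis using R1p Yv by simp
    next
      assume "p \<in> closed_segment B Og"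
      then obtain u where u: "0 \<le> u" "u \<le> 1" "fst p = (1-u) * fst B + u * fst Og" "snd p = (1-u) * snd B + u * snd Og"
        by (rule seg_coords)
      have fp: "fst p = (1-u) * \<epsilon>" and sp: "snd p = - ((1-u) * (real L1 + 1/2))"
        using u Yv unfolding B_def Og_def by (auto simp: algebra_simps)
      show ?thesis
      proof (cases "u = 1")
        case True
        then have "p = Og" using fp sp unfolding Og_def by (cases p) auto
        then show ?thesis using P1r by simp
      next
        case False
        then have u1: "0 < 1 - u" using u by simp
        then have "snd p < 0" using sp by (simp add: mult_pos_pos add_pos_nonneg)
        then have "\<mu>1 * ((1-u) * (real L1 + 1/2)) \<le> (1-u) * \<epsilon>" using R1p fp sp by simp
        then have "(1-u) * (\<mu>1 * (real L1 + 1/2)) \<le> (1-u) * \<epsilon>" by (simp add: algebra_simps)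
        then have "\<mu>1 * (real L1 + 1/2) \<le> \<epsilon>" using u1 by simp
        then show ?thesis using eps2 by simp
      qed
    qed
  qed
  have gi2: "path_image \<gamma> \<inter> ?D2 \<subseteq> {Pt px2' py2' w}"
  proof
    fix p assume p: "p \<in> path_image \<gamma> \<inter> ?D2"
    then have I: "X \<le> fst p" "fst p = X \<longrightarrow> p = A" using inD2 by auto
    from p have "p \<in> closed_segment A B \<or> p \<in> closed_segment B Og" using pg by auto
    then show "p \<in> {Pt px2' py2' w}"
    proof
      assume "p \<in> closed_segment A B"
      then obtain u where u: "0 \<le> u" "u \<le> 1" "fst p = (1-u) * fst A + u * fst B" by (rule seg_coords)
      have "fst p = X - u * (X - \<epsilon>)" using u unfolding A_def B_def by (simp add: algebra_simps)
      moreover have "0 \<le> u * (X - \<epsilon>)" using u eps1 X1 by simp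
      ultimately have "fst p \<le> X" by simp
      then show ?thesis using I P2w by simp
    next
      assume "p \<in> closed_segment B Og"
      then obtain u where u: "0 \<le> u" "u \<le> 1" "fst p = (1-u) * fst B + u * fst Og" by (rule seg_coords)
      have "fst p \<le> \<epsilon>" using u eps0 unfolding B_def Og_def
        by (simp add: mult_left_le_one_le)
      then show ?thesis using I eps1 X1 by simp
    qed
  qed
  define px where "px = (\<lambda>v. if v \<in> V1 then px1 v else px2' v)"
  define py where "py = (\<lambda>v. if v \<in> V1 then py1 v else py2' v)"
  define g where "g = (\<lambda>e. if e = (w, r) then \<gamma> else if e \<in> E1 then g1 e else g2' e)"
  have Ppx: "Pt px py w = A" "Pt px py r = Og" using P2w P1r r1 w2 disjV unfolding px_def py_def Pt_def by auto
  have G: "upward_layered_drawing (V1 \<union> V2) (insert (w,r) (E1 \<union> E2)) px py g"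
    "onv (V1 \<union> V2) (insert (w,r) (E1 \<union> E2)) px py g"
    "dset (V1 \<union> V2) (insert (w,r) (E1 \<union> E2)) px py g = ?D1 \<union> ?D2 \<union> path_image \<gamma>"
    using glue[OF D1 O1 D2' O2' disjV E1V E2V disjD r1(1) w2(1), of "(w, r)" \<gamma>] pg Ppx gi1 gi2
    unfolding px_def py_def g_def by auto
  define L where "L = L1 + 1 + L2"
  define \<mu> where "\<mu> = min \<mu>1 (min (\<epsilon> / (real L1 + 1)) (1 / (real L + 1)))"
  have mu0: "\<mu> > 0" unfolding \<mu>_def using mu1 eps0 by simp
  have mu_le: "\<mu> \<le> \<mu>1" "\<mu> \<le> \<epsilon> / (real L1 + 1)" "\<mu> \<le> 1 / (real L + 1)" unfolding \<mu>_def by auto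
  have reg: "0 \<le> fst p \<and> fst p \<le> X + W2 \<and> (fst p = 0 \<longrightarrow> p = (0,0)) \<and> - real L \<le> snd p \<and>
        (snd p < 0 \<longrightarrow> \<mu> * (- snd p) \<le> fst p)" if p: "p \<in> ?D1 \<union> ?D2 \<union> path_image \<gamma>" for p
  proof -
    consider "p \<in> ?D1" | "p \<in> ?D2" | "p \<in> closed_segment A B" | "p \<in> closed_segment B Og"
      using p pg by auto
    then show ?thesis
    proof cases
      case 1
      then have R1p: "0 \<le> fst p" "fst p \<le> W1" "fst p = 0 \<longrightarrow> p = (0,0)" "- real L1 \<le> snd p" "snd p < 0 \<longrightarrow> \<mu>1 * (- snd p) \<le> fst p"
        using R1 by auto
      have "snd p < 0 \<longrightarrow> \<mu> * (- snd p) \<le> fst p"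
        using R1p(5) mu_le(1) by (smt (verit) mult_right_mono)
      then show ?thesis using R1p W1 W2 unfolding L_def X_def by auto
    next
      case 2
      then have I: "X \<le> fst p" "fst p \<le> X + W2" "real_of_int Y - real L2 \<le> snd p" using inD2 by auto
      have sL: "- real L \<le> snd p" using I(3) Yv unfolding L_def by simp
      have "\<mu> * (- snd p) \<le> 1"
      proof -
        have "- snd p \<le> real L" using sL by simp
        moreover have "\<mu> * (real L + 1) \<le> 1"
          using mu_le(3) by (simp add: le_divide_eq)
        moreover have "\<mu> * real L \<le> \<mu> * (real L + 1)" using mu0 by simp
        moreover have "\<mu> * (- snd p) \<le> \<mu> * real L"
          using \<open>- snd p \<le> real L\<close> mu0 by (intro mult_left_mono) auto
        ultimately show ?thesis by linarith
      qed
      then have "\<mu> * (- snd p) \<le> fst p" using I X1 by linarith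
      moreover have "fst p \<noteq> 0" using I X1 by linarith
      ultimately show ?thesis using I sL X1 by simp
    next
      case 3
      then obtain u where u: "0 \<le> u" "u \<le> 1" "fst p = (1-u) * fst A + u * fst B" "snd p = (1-u) * snd A + u * snd B"
        by (rule seg_coords)
      have fp: "fst p = (1-u) * X + u * \<epsilon>" and sp: "snd p = - real L1 - 1 + u / 2"
        using u Yv unfolding A_def B_def by (auto simp: algebra_simps)
      have fq: "fst p = \<epsilon> + (1-u) * (X - \<epsilon>)" "fst p = X - u * (X - \<epsilon>)" using fp by (simp_all add: algebra_simps)
      have "0 \<le> (1-u) * (X - \<epsilon>)" "0 \<le> u * (X - \<epsilon>)" using u eps1 X1 by simp_all
      then have f1: "\<epsilon> \<le> fst p" "fst p \<le> X" using fq by linarith+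
      have s1: "- real L1 - 1 \<le> snd p" using sp u by simp
      have "\<mu> * (- snd p) \<le> \<epsilon>"
      proof -
        have "- snd p \<le> real L1 + 1" using s1 by simp
        then have "\<mu> * (- snd p) \<le> \<mu> * (real L1 + 1)" using mu0 by (intro mult_left_mono) auto
        also have "\<dots> \<le> \<epsilon>" using mu_le(2) by (simp add: le_divide_eq add_pos_nonneg)
        finally show ?thesis .
      qed
      then show ?thesis using f1 s1 eps0 W1 W2 unfolding L_def by auto
    next
      case 4
      then obtain u where u: "0 \<le> u" "u \<le> 1" "fst p = (1-u) * fst B + u * fst Og" "snd p = (1-u) * snd B + u * snd Og"
        by (rule seg_coords)
      have fp: "fst p = (1-u) * \<epsilon>" and sp: "snd p = - ((1-u) * (real L1 + 1/2))"
        using u Yv unfolding B_def Og_def by (auto simp: algebra_simps)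
      have f0: "0 \<le> fst p" "fst p \<le> \<epsilon>" using fp u eps0 by (auto simp: mult_left_le_one_le)
      have s0: "- real L1 - 1 \<le> snd p"
      proof -
        have "(1-u) * (real L1 + 1/2) \<le> real L1 + 1/2" using mult_right_mono[of "1-u" 1 "real L1 + 1/2"] u by simp
        then show ?thesis using sp by linarith
      qed
      have z: "fst p = 0 \<longrightarrow> p = (0,0)"
      proof
        assume "fst p = 0"
        then have "u = 1" using fp eps0 by simp
        then show "p = (0,0)" using fp sp by (cases p) auto
      qed
      have w: "\<mu> * (- snd p) \<le> fst p"
      proof -
        have "\<mu> * (real L1 + 1/2) \<le> \<mu> * (real L1 + 1)" using mu0 by simp
        also have "\<dots> \<le> \<epsilon>" using mu_le(2) by (simp add: le_divide_eq add_pos_nonneg)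
        finally have "(1-u) * (\<mu> * (real L1 + 1/2)) \<le> (1-u) * \<epsilon>" using u by (intro mult_left_mono) auto
        moreover have "\<mu> * (- snd p) = (1-u) * (\<mu> * (real L1 + 1/2))" unfolding sp by (simp add: algebra_simps)
        ultimately show ?thesis using fp by simp
      qed
      show ?thesis using f0 s0 z w eps1 X1 W1 W2 unfolding L_def by auto
    qed
  qed
  have pyr: "py r = 0" using r1 unfolding py_def by simp
  have pxr: "px r = 0" using r1 unfolding px_def by simp
  have py1: "\<forall>v\<in>V1. py v = py1 v" unfolding py_def by simp
  have py2: "\<forall>v\<in>V2. py v = py2 v - int (L1 + 1)" using disjV unfolding py_def py2'_def Y_def by auto
  show ?thesis
    apply (rule exI[of _ px], rule exI[of _ py], rule exI[of _ g], rule exI[of _ "X + W2"], rule exI[of _ \<mu>])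
    using G reg mu0 pyr pxr py1 py2 unfolding L_def by auto
qed

lemma step_up_geo:
  fixes L2 :: nat and W1 W2 \<nu>1 :: real and r u :: 'a
  assumes D1: "upward_layered_drawing V1 E1 px1 py1 g1" and O1: "onv V1 E1 px1 py1 g1"
    and r1: "r \<in> V1" "px1 r = 0" "py1 r = 0" and nu1: "\<nu>1 > 0"
    and R1: "\<forall>p\<in>dset V1 E1 px1 py1 g1. 0 \<le> fst p \<and> fst p \<le> W1 \<and> (fst p = 0 \<longrightarrow> p = (0,0)) \<and>
               \<nu>1 * fst p \<le> snd p"
    and D2: "upward_layered_drawing V2 E2 px2 py2 g2" and O2: "onv V2 E2 px2 py2 g2"
    and u2: "u \<in> V2" "px2 u = 0" "py2 u = 0"
    and R2: "\<forall>p\<in>dset V2 E2 px2 py2 g2. 0 \<le> fst p \<and> fst p \<le> W2 \<and> (fst p = 0 \<longrightarrow> p = (0,0)) \<and>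
               - real L2 \<le> snd p"
    and disjV: "V1 \<inter> V2 = {}" and E1V: "E1 \<subseteq> V1 \<times> V1" and E2V: "E2 \<subseteq> V2 \<times> V2"
  shows "\<exists>px py g W \<nu>. upward_layered_drawing (V1 \<union> V2) (insert (r,u) (E1 \<union> E2)) px py g \<and>
     onv (V1 \<union> V2) (insert (r,u) (E1 \<union> E2)) px py g \<and> px r = 0 \<and> py r = 0 \<and> \<nu> > 0 \<and>
     (\<forall>p\<in>dset (V1 \<union> V2) (insert (r,u) (E1 \<union> E2)) px py g. 0 \<le> fst p \<and> fst p \<le> W \<and>
        (fst p = 0 \<longrightarrow> p = (0,0)) \<and> \<nu> * fst p \<le> snd p) \<and>
     (\<forall>v\<in>V1. py v = py1 v) \<and> (\<forall>v\<in>V2. py v = py2 v + int (L2 + 1))"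
proof -
  have W1: "0 \<le> W1" using R1 r1 unfolding dset_def Pt_def by force
  have W2: "0 \<le> W2" using R2 u2 unfolding dset_def Pt_def by force
  define X where "X = W1 + 1 + 1 / \<nu>1"
  define Y :: int where "Y = int (L2 + 1)"
  define \<tau> where "\<tau> = (\<lambda>p::real\<times>real. p + (X, real_of_int Y))"
  define px2' where "px2' = (\<lambda>v. px2 v + X)"
  define py2' where "py2' = (\<lambda>v. py2 v + Y)"
  define g2' where "g2' = (\<lambda>e t. \<tau> (g2 e t))"
  have D2': "upward_layered_drawing V2 E2 px2' py2' g2'" and O2': "onv V2 E2 px2' py2' g2'"
    and DS2: "dset V2 E2 px2' py2' g2' = \<tau> ` dset V2 E2 px2 py2 g2"
    using translate[OF D2 O2, of X Y] unfolding px2'_def py2'_def g2'_def \<tau>_def by auto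
  have X1: "1 \<le> X" unfolding X_def using W1 nu1 by simp
  have nuX: "\<nu>1 * X > 1/2"
  proof -
    have "\<nu>1 * X = \<nu>1 * (W1 + 1) + 1" unfolding X_def using nu1 by (simp add: algebra_simps)
    moreover have "0 \<le> \<nu>1 * (W1 + 1)" using nu1 W1 by simp
    ultimately show ?thesis by linarith
  qed
  have Yv: "real_of_int Y = real L2 + 1" unfolding Y_def by simp
  define A where "A = ((0::real), (0::real))"
  define B where "B = (X, (1/2::real))"
  define C where "C = (X, real_of_int Y)"
  define \<gamma> where "\<gamma> = linepath A B +++ linepath B C"
  have pg: "path \<gamma>" "pathstart \<gamma> = A" "pathfinish \<gamma> = C" "strict_mono_on {0..1} (\<lambda>t. snd (\<gamma> t))"
    "path_image \<gamma> = closed_segment A B \<union> closed_segment B C"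
    using poly2[of A B C] Yv unfolding \<gamma>_def A_def B_def C_def by auto
  let ?D1 = "dset V1 E1 px1 py1 g1" and ?D2 = "dset V2 E2 px2' py2' g2'"
  have inD2: "X \<le> fst q \<and> fst q \<le> X + W2 \<and> (fst q = X \<longrightarrow> q = C) \<and> 1 \<le> snd q" if "q \<in> ?D2" for q
  proof -
    from that obtain q0 where q0: "q0 \<in> dset V2 E2 px2 py2 g2" "q = \<tau> q0" using DS2 by auto
    then show ?thesis using R2 Yv unfolding \<tau>_def C_def by (cases q0) auto
  qed
  have P1r: "Pt px1 py1 r = A" unfolding Pt_def A_def using r1 by simp
  have P2u: "Pt px2' py2' u = C" unfolding Pt_def C_def px2'_def py2'_def using u2 by simp
  have disjD: "?D1 \<inter> ?D2 = {}"
  proof -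
    { fix q assume "q \<in> ?D1" "q \<in> ?D2"
      then have "fst q \<le> W1" "X \<le> fst q" using R1 inD2 by auto
      then have False using nu1 unfolding X_def by (smt (verit) divide_pos_pos) }
    then show ?thesis by blast
  qed
  have XW1: "W1 < X" unfolding X_def using nu1 by (simp add: add_pos_pos)
  have gi1: "path_image \<gamma> \<inter> ?D1 \<subseteq> {Pt px1 py1 r}"
  proof
    fix p assume p: "p \<in> path_image \<gamma> \<inter> ?D1"
    then have R1p: "fst p \<le> W1" "\<nu>1 * fst p \<le> snd p" using R1 by auto
    from p have "p \<in> closed_segment A B \<or> p \<in> closed_segment B C" using pg by auto
    then show "p \<in> {Pt px1 py1 r}"
    proof
      assume "p \<in> closed_segment A B"
      then obtain t where t: "0 \<le> t" "t \<le> 1" "fst p = (1-t) * fst A + t * fst B" "snd p = (1-t) * snd A + t * snd B"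
        by (rule seg_coords)
      have fp: "fst p = t * X" and sp: "snd p = t / 2" using t unfolding A_def B_def by auto
      show ?thesis
      proof (cases "t = 0")
        case True
        then have "p = A" using fp sp unfolding A_def by (cases p) auto
        then show ?thesis using P1r by simp
      next
        case False
        then have t0: "0 < t" using t by simp
        have "t * (\<nu>1 * X) \<le> t * (1/2)" using R1p(2) fp sp by (simp add: algebra_simps)
        then have "\<nu>1 * X \<le> 1/2" using t0 by simp
        then show ?thesis using nuX by simp
      qed
    next
      assume "p \<in> closed_segment B C"
      then obtain t where t: "0 \<le> t" "t \<le> 1" "fst p = (1-t) * fst B + t * fst C" by (rule seg_coords)
      have "fst p = X" using t unfolding B_def C_def by (simp add: algebra_simps)
      then show ?thesis using R1p XW1 by simp
    qed
  qed
  have gi2: "path_image \<gamma> \<inter> ?D2 \<subseteq> {Pt px2' py2' u}"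
  proof
    fix p assume p: "p \<in> path_image \<gamma> \<inter> ?D2"
    then have I: "X \<le> fst p" "fst p = X \<longrightarrow> p = C" using inD2 by auto
    from p have "p \<in> closed_segment A B \<or> p \<in> closed_segment B C" using pg by auto
    then show "p \<in> {Pt px2' py2' u}"
    proof
      assume "p \<in> closed_segment A B"
      then obtain t where t: "0 \<le> t" "t \<le> 1" "fst p = (1-t) * fst A + t * fst B" by (rule seg_coords)
      have "fst p = t * X" using t unfolding A_def B_def by simp
      moreover have "t * X \<le> 1 * X" using t X1 by (intro mult_right_mono) auto
      ultimately show ?thesis using I P2u by simp
    next
      assume "p \<in> closed_segment B C"
      then obtain t where t: "0 \<le> t" "t \<le> 1" "fst p = (1-t) * fst B + t * fst C" by (rule seg_coords)
      have "fst p = X" using t unfolding B_def C_def by (simp add: algebra_simps)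
      then show ?thesis using I P2u by simp
    qed
  qed
  define px where "px = (\<lambda>v. if v \<in> V1 then px1 v else px2' v)"
  define py where "py = (\<lambda>v. if v \<in> V1 then py1 v else py2' v)"
  define g where "g = (\<lambda>e. if e = (r, u) then \<gamma> else if e \<in> E1 then g1 e else g2' e)"
  have Ppx: "Pt px py r = A" "Pt px py u = C" using P2u P1r r1 u2 disjV unfolding px_def py_def Pt_def by auto
  have G: "upward_layered_drawing (V1 \<union> V2) (insert (r,u) (E1 \<union> E2)) px py g"
    "onv (V1 \<union> V2) (insert (r,u) (E1 \<union> E2)) px py g"
    "dset (V1 \<union> V2) (insert (r,u) (E1 \<union> E2)) px py g = ?D1 \<union> ?D2 \<union> path_image \<gamma>"
    using glue[OF D1 O1 D2' O2' disjV E1V E2V disjD r1(1) u2(1), of "(r, u)" \<gamma>] pg Ppx gi1 gi2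
    unfolding px_def py_def g_def by auto
  define \<nu> where "\<nu> = min \<nu>1 (1 / (2 * (X + W2)))"
  have XW: "0 < X + W2" using X1 W2 by simp
  have nu0: "\<nu> > 0" unfolding \<nu>_def using nu1 XW by simp
  have nu_le: "\<nu> \<le> \<nu>1" "\<nu> * (X + W2) \<le> 1/2" unfolding \<nu>_def using XW
    by (auto simp: min_def field_simps)
  have nuX2: "\<nu> * X \<le> 1/2"
  proof -
    have "\<nu> * X \<le> \<nu> * (X + W2)" using nu0 W2 by simp
    then show ?thesis using nu_le(2) by linarith
  qed
  have reg: "0 \<le> fst p \<and> fst p \<le> X + W2 \<and> (fst p = 0 \<longrightarrow> p = (0,0)) \<and> \<nu> * fst p \<le> snd p"
    if p: "p \<in> ?D1 \<union> ?D2 \<union> path_image \<gamma>" for p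
  proof -
    consider "p \<in> ?D1" | "p \<in> ?D2" | "p \<in> closed_segment A B" | "p \<in> closed_segment B C"
      using p pg by auto
    then show ?thesis
    proof cases
      case 1
      then have R1p: "0 \<le> fst p" "fst p \<le> W1" "fst p = 0 \<longrightarrow> p = (0,0)" "\<nu>1 * fst p \<le> snd p"
        using R1 by auto
      have "\<nu> * fst p \<le> \<nu>1 * fst p" using nu_le(1) R1p(1) by (intro mult_right_mono) auto
      then show ?thesis using R1p XW1 W2 by auto
    next
      case 2
      then have I: "X \<le> fst p" "fst p \<le> X + W2" "1 \<le> snd p" using inD2 by auto
      have "\<nu> * fst p \<le> \<nu> * (X + W2)" using I nu0 by (intro mult_left_mono) auto
      then have "\<nu> * fst p \<le> snd p" using nu_le(2) I(3) by linarith
      moreover have "fst p \<noteq> 0" using I X1 by linarith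
      ultimately show ?thesis using I X1 by simp
    next
      case 3
      then obtain t where t: "0 \<le> t" "t \<le> 1" "fst p = (1-t) * fst A + t * fst B" "snd p = (1-t) * snd A + t * snd B"
        by (rule seg_coords)
      have fp: "fst p = t * X" and sp: "snd p = t / 2" using t unfolding A_def B_def by auto
      have tX: "t * X \<le> X" using mult_right_mono[of t 1 X] t X1 by simp
      have tX0: "0 \<le> t * X" using t X1 by simp
      have f1: "0 \<le> fst p" "fst p \<le> X + W2" using fp tX tX0 W2 by linarith+
      have z: "fst p = 0 \<longrightarrow> p = (0,0)"
      proof
        assume "fst p = 0"
        then have "t = 0" using fp X1 by simp
        then show "p = (0,0)" using fp sp by (cases p) auto
      qed
      have "t * (\<nu> * X) \<le> t * (1/2)" using nuX2 t by (intro mult_left_mono) auto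
      then have "\<nu> * fst p \<le> snd p" using fp sp by (simp add: algebra_simps)
      then show ?thesis using f1 z by simp
    next
      case 4
      then obtain t where t: "0 \<le> t" "t \<le> 1" "fst p = (1-t) * fst B + t * fst C" "snd p = (1-t) * snd B + t * snd C"
        by (rule seg_coords)
      have fp: "fst p = X" using t unfolding B_def C_def by (simp add: algebra_simps)
      have sp: "snd p = 1/2 + t * (real L2 + 1/2)" using t Yv unfolding B_def C_def by (simp add: field_simps)
      have "0 \<le> t * (real L2 + 1/2)" using t by simp
      then have "1/2 \<le> snd p" using sp by linarith
      then show ?thesis using fp X1 W2 nuX2 by auto
    qed
  qed
  have pyr: "py r = 0" using r1 unfolding py_def by simp
  have pxr: "px r = 0" using r1 unfolding px_def by simp
  have py1: "\<forall>v\<in>V1. py v = py1 v" unfolding py_def by simp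
  have py2: "\<forall>v\<in>V2. py v = py2 v + int (L2 + 1)" using disjV unfolding py_def py2'_def Y_def by auto
  show ?thesis
    apply (rule exI[of _ px], rule exI[of _ py], rule exI[of _ g], rule exI[of _ "X + W2"], rule exI[of _ \<nu>])
    using G reg nu0 pyr pxr py1 py2 by auto
qed


definition indeg :: "('a \<times> 'a) set \<Rightarrow> 'a \<Rightarrow> nat" where
  "indeg E r = card {e\<in>E. snd e = r}"

fun Lam :: "nat \<Rightarrow> nat \<Rightarrow> nat" where
  "Lam d 0 = 0"
| "Lam d (Suc h) = (d - 1) * (1 + Lam d h)"

lemma Lam_mono: "h \<le> h' \<Longrightarrow> 2 \<le> d \<Longrightarrow> Lam d h \<le> Lam d h'"
proof (induction h' arbitrary: h)
  case 0 then show ?case by simp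
next
  case (Suc h')
  have "1 \<le> d - 1" using Suc.prems(2) by simp
  then have "1 * (1 + Lam d h') \<le> (d - 1) * (1 + Lam d h')" by (rule mult_le_mono1)
  then have "Lam d h' \<le> Lam d (Suc h')" by simp
  show ?case
  proof (cases "h = Suc h'")
    case True then show ?thesis by simp
  next
    case False
    then have "h \<le> h'" using Suc.prems(1) by simp
    then show ?thesis using Suc.IH Suc.prems(2) \<open>Lam d h' \<le> Lam d (Suc h')\<close> le_trans by blast
  qed
qed

lemma Lam_step: "L \<le> k * (1 + Lam d (h - 1)) \<Longrightarrow> k \<le> d - 1 \<Longrightarrow> (k > 0 \<Longrightarrow> h \<ge> 1) \<Longrightarrow> L \<le> Lam d h"
proof (cases "k = 0")
  case True
  assume "L \<le> k * (1 + Lam d (h - 1))" then show ?thesis using True by simp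
next
  case False
  assume a: "L \<le> k * (1 + Lam d (h - 1))" "k \<le> d - 1" "(k > 0 \<Longrightarrow> h \<ge> 1)"
  then have "h \<ge> 1" using False by simp
  then obtain m where m: "h = Suc m" by (cases h) auto
  have "k * (1 + Lam d m) \<le> (d - 1) * (1 + Lam d m)" using a(2) by (rule mult_le_mono1)
  then have "L \<le> (d - 1) * (1 + Lam d m)" using a(1) m by simp
  then show ?thesis using m by simp
qed

lemma Lam_bound: "2 \<le> d - 1 \<Longrightarrow> Lam d h + 2 \<le> 2 * (d - 1) ^ h"
proof (induction h)
  case 0 then show ?case by simp
next
  case (Suc h)
  define k where "k = d - 1"
  have IH: "Lam d h + 2 \<le> 2 * k ^ h" using Suc unfolding k_def by simp
  have k2: "2 \<le> k" using Suc.prems unfolding k_def by simp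
  have "k * (Lam d h + 2) \<le> k * (2 * k ^ h)" using IH by (rule mult_le_mono2)
  moreover have "k * (Lam d h + 2) = k * (1 + Lam d h) + k" by (simp add: algebra_simps)
  ultimately have "k * (1 + Lam d h) + 2 \<le> 2 * k ^ Suc h" using k2 by (simp add: algebra_simps)
  then show ?case unfolding k_def by simp
qed

lemma dpath_mono: "dpath V' E' p \<Longrightarrow> V' \<subseteq> V \<Longrightarrow> E' \<subseteq> E \<Longrightarrow> dpath V E p"
  unfolding dpath_def by auto

lemma dpath_snoc:
  assumes "dpath V E p" "(last p, x) \<in> E" "x \<in> V"
  shows "dpath V E (p @ [x])"
  unfolding dpath_def
proof (intro conjI allI impI)
  show "p @ [x] \<noteq> []" by simp
  show "set (p @ [x]) \<subseteq> V" using assms unfolding dpath_def by auto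
  fix i assume i: "i < length (p @ [x]) - 1"
  have pne: "p \<noteq> []" using assms unfolding dpath_def by simp
  show "((p @ [x]) ! i, (p @ [x]) ! Suc i) \<in> E"
  proof (cases "i < length p - 1")
    case True
    then show ?thesis using assms(1) unfolding dpath_def by (auto simp: nth_append)
  next
    case False
    then have "i = length p - 1" using i by simp
    then show ?thesis using assms(2) pne by (auto simp: nth_append last_conv_nth)
  qed
qed

lemma dpath_edge: "(x, y) \<in> E \<Longrightarrow> x \<in> V \<Longrightarrow> y \<in> V \<Longrightarrow> dpath V E [x, y]"
  unfolding dpath_def by (simp add: less_one)

lemma vdeg_mono: "finite E \<Longrightarrow> E' \<subseteq> E \<Longrightarrow> vdegree E' v \<le> vdegree E v"
proof -
  assume f: "finite E" and s: "E' \<subseteq> E"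
  have "{e\<in>E'. fst e = v \<or> snd e = v} \<subseteq> {e\<in>E. fst e = v \<or> snd e = v}" using s by blast
  moreover have "finite {e\<in>E. fst e = v \<or> snd e = v}" using f by simp
  ultimately show ?thesis unfolding vdegree_def by (rule card_mono[rotated])
qed

lemma indeg_le_vdeg: "finite E \<Longrightarrow> indeg E v \<le> vdegree E v"
proof -
  assume f: "finite E"
  have "{e\<in>E. snd e = v} \<subseteq> {e\<in>E. fst e = v \<or> snd e = v}" by blast
  moreover have "finite {e\<in>E. fst e = v \<or> snd e = v}" using f by simp
  ultimately show ?thesis unfolding vdegree_def indeg_def by (rule card_mono[rotated])
qed

lemma indeg_sub_le: assumes "finite E" "E' \<subseteq> E" "e0 \<in> E" "fst e0 = v \<or> snd e0 = v" "e0 \<notin> E'"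
  shows "indeg E' v + 1 \<le> vdegree E v"
proof -
  have "{e\<in>E'. snd e = v} \<subseteq> {e\<in>E. fst e = v \<or> snd e = v} - {e0}" using assms(2,5) by blast
  moreover have "finite ({e\<in>E. fst e = v \<or> snd e = v} - {e0})" using assms(1) by simp
  ultimately have "card {e\<in>E'. snd e = v} \<le> card ({e\<in>E. fst e = v \<or> snd e = v} - {e0})"
    by (meson card_mono)
  also have "\<dots> = vdegree E v - 1" unfolding vdegree_def
  proof (rule card_Diff_singleton)
    show "e0 \<in> {e\<in>E. fst e = v \<or> snd e = v}" using assms(3,4) by blast
  qed
  finally have "indeg E' v \<le> vdegree E v - 1" unfolding indeg_def .
  moreover have "vdegree E v > 0"
  proof -
    have "e0 \<in> {e\<in>E. fst e = v \<or> snd e = v}" using assms(3,4) by blast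
    moreover have "finite {e\<in>E. fst e = v \<or> snd e = v}" using assms(1) by simp
    ultimately show ?thesis unfolding vdegree_def using card_gt_0_iff by blast
  qed
  ultimately show ?thesis by linarith
qed

definition good :: "'a set \<Rightarrow> ('a \<times> 'a) set \<Rightarrow> 'a \<Rightarrow> nat \<Rightarrow> nat \<Rightarrow> nat \<Rightarrow> ('a \<Rightarrow> real) \<Rightarrow> ('a \<Rightarrow> int) \<Rightarrow>
    ('a \<times> 'a \<Rightarrow> real \<Rightarrow> real \<times> real) \<Rightarrow> nat \<Rightarrow> real \<Rightarrow> real \<Rightarrow> real \<Rightarrow> bool" where
  "good V E r d l h px py g L W \<mu> \<nu> \<longleftrightarrow> upward_layered_drawing V E px py g \<and> onv V E px py g \<and>
     px r = 0 \<and> py r = 0 \<and> \<mu> > 0 \<and> \<nu> > 0 \<and>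
     (\<forall>p\<in>dset V E px py g. 0 \<le> fst p \<and> fst p \<le> W \<and> (fst p = 0 \<longrightarrow> p = (0,0)) \<and> - real L \<le> snd p \<and>
        (snd p < 0 \<longrightarrow> \<mu> * (- snd p) \<le> fst p) \<and> (indeg E r = 0 \<longrightarrow> \<nu> * fst p \<le> snd p)) \<and>
     L \<le> indeg E r * (1 + Lam d (h - 1)) \<and> (\<forall>e\<in>E. py (snd e) - py (fst e) \<le> int (Lam d l + 1))"

lemma split_tree_ex:
  assumes "directed_tree V E" "(a,b) \<in> E"
  shows "\<exists>Va Vb Ea Eb. directed_tree Va Ea \<and> directed_tree Vb Eb \<and> Va \<inter> Vb = {} \<and> V = Va \<union> Vb \<and>
    E = insert (a,b) (Ea \<union> Eb) \<and> a \<in> Va \<and> b \<in> Vb \<and> Ea \<subseteq> E \<and> Eb \<subseteq> E \<and> (a,b) \<notin> Ea \<union> Eb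
    \<and> Ea \<subseteq> Va \<times> Va \<and> Eb \<subseteq> Vb \<times> Vb"
proof -
  note s = split_tree[OF assms]
  show ?thesis by (rule exI, rule exI, rule exI, rule exI, rule s)
qed

lemma good_base:
  assumes "V = {r}" "E = {}"
  shows "good V E r d l h (\<lambda>_. 0) (\<lambda>_. 0) (\<lambda>_ _. (0,0)) 0 0 1 1"
proof -
  have "upward_layered_drawing V E (\<lambda>_. 0) (\<lambda>_. 0) (\<lambda>_ _. (0,0))"
    unfolding uld_Pt using assms by simp
  moreover have "dset V E (\<lambda>_. 0) (\<lambda>_. 0) (\<lambda>_ _. (0,0)) = {(0,0)}"
    unfolding dset_def Pt_def using assms by simp
  moreover have "indeg E r = 0" unfolding indeg_def using assms by simp
  ultimately show ?thesis unfolding good_def onv_def using assms by simp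
qed

lemma main_lemma:
  fixes V :: "'a set" and E :: "('a \<times> 'a) set"
  assumes "directed_tree V E" "r \<in> V" "\<forall>v\<in>V. vdegree E v \<le> d" "2 \<le> d"
    "\<forall>p. dpath V E p \<longrightarrow> length p - 1 \<le> l" "\<forall>p. dpath V E p \<and> last p = r \<longrightarrow> length p - 1 \<le> h" "h \<le> l"
  shows "\<exists>px py g L W \<mu> \<nu>. good V E r d l h px py g L W \<mu> \<nu>"
  using assms
proof (induction "card V" arbitrary: V E r h rule: less_induct)
  case less
  note T = less.prems(1)
  from T have fV: "finite V" and EV: "E \<subseteq> V \<times> V" and acyc: "acyclic E"
    and conn: "\<forall>u\<in>V. \<forall>v\<in>V. (u, v) \<in> (E \<union> E\<inverse>)\<^sup>*" and cardE: "card E + 1 = card V"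
    unfolding directed_tree_def by auto
  have "finite (V \<times> V)" using fV by simp
  then have fE: "finite E" using EV finite_subset by blast
  have rV: "r \<in> V" using less.prems(2) .
  have deg: "\<forall>v\<in>V. vdegree E v \<le> d" using less.prems(3) .
  have d2: "2 \<le> d" using less.prems(4) .
  have pl: "\<forall>p. dpath V E p \<longrightarrow> length p - 1 \<le> l" using less.prems(5) .
  have ph: "\<forall>p. dpath V E p \<and> last p = r \<longrightarrow> length p - 1 \<le> h" using less.prems(6) .
  have hl: "h \<le> l" using less.prems(7) .
  have noloop: "(x, x) \<notin> E" for x using acyc unfolding acyclic_def by auto
  show ?case
  proof (cases "E = {}")
    case True
    then have "card V = 1" using cardE by simp
    then obtain x where "V = {x}" by (rule card_1_singletonE)
    then have Vr: "V = {r}" using rV by simp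
    show ?thesis
      apply (rule exI)+
      apply (rule good_base[OF Vr True])
      done
  next
    case False
    have "card E > 0" using False fE card_gt_0_iff by blast
    then have "card V \<ge> 2" using cardE by linarith
    then have "card (V - {r}) > 0" using card_Diff_singleton[OF rV] by linarith
    then have "V - {r} \<noteq> {}" by (metis card.empty less_irrefl)
    then obtain v where v: "v \<in> V" "v \<noteq> r" by blast
    have "(r, v) \<in> (E \<union> E\<inverse>)\<^sup>*" using conn rV v by auto
    then obtain z where "(r, z) \<in> E \<union> E\<inverse>" using v(2) by (cases rule: converse_rtranclE) auto
    then have inc: "(\<exists>w. (w, r) \<in> E) \<or> (\<exists>u. (r, u) \<in> E)" by auto
    show ?thesis
    proof (cases "\<exists>w. (w, r) \<in> E")
      case True
      then obtain w where wr: "(w, r) \<in> E" by blast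
      from split_tree_ex[OF T wr] obtain V2 V1 E2 E1 where spc: "directed_tree V2 E2 \<and> directed_tree V1 E1 \<and> V2 \<inter> V1 = {} \<and> V = V2 \<union> V1 \<and>
        E = insert (w, r) (E2 \<union> E1) \<and> w \<in> V2 \<and> r \<in> V1 \<and> E2 \<subseteq> E \<and> E1 \<subseteq> E \<and> (w, r) \<notin> E2 \<union> E1 \<and>
        E2 \<subseteq> V2 \<times> V2 \<and> E1 \<subseteq> V1 \<times> V1" by blast
      have sp: "directed_tree V2 E2" "directed_tree V1 E1" "V2 \<inter> V1 = {}" "V = V2 \<union> V1"
        "E = insert (w, r) (E2 \<union> E1)" "w \<in> V2" "r \<in> V1" "E2 \<subseteq> E" "E1 \<subseteq> E" "(w, r) \<notin> E2 \<union> E1"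
        "E2 \<subseteq> V2 \<times> V2" "E1 \<subseteq> V1 \<times> V1" using spc by blast+
      have sub1: "V1 \<subseteq> V" and sub2: "V2 \<subseteq> V" using sp(4) by blast+
      have fV1: "finite V1" and fV2: "finite V2" using fV sub1 sub2 finite_subset by blast+
      have cV: "card V = card V2 + card V1" unfolding sp(4) by (rule card_Un_disjoint[OF fV2 fV1 sp(3)])
      have "card V2 > 0" using fV2 sp(6) by (auto simp: card_gt_0_iff)
      then have c1: "card V1 < card V" using cV by linarith
      have "card V1 > 0" using fV1 sp(7) by (auto simp: card_gt_0_iff)
      then have c2: "card V2 < card V" using cV by linarith
      have h1: "1 \<le> h"
      proof -
        have "w \<in> V" using sub2 sp(6) by blast
        then have "dpath V E [w, r]" using rV by (rule dpath_edge[OF wr])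
        then have "length [w, r] - 1 \<le> h" using ph[rule_format, of "[w, r]"] by simp
        then show ?thesis by simp
      qed
      have IH1: "\<exists>px py g L W \<mu> \<nu>. good V1 E1 r d l h px py g L W \<mu> \<nu>"
      proof (rule less.hyps[OF c1 sp(2) sp(7)])
        show "\<forall>v\<in>V1. vdegree E1 v \<le> d"
        proof
          fix v assume "v \<in> V1"
          then show "vdegree E1 v \<le> d" using vdeg_mono[OF fE sp(9), of v] deg sub1 by force
        qed
        show "2 \<le> d" by (rule d2)
        show "\<forall>p. dpath V1 E1 p \<longrightarrow> length p - 1 \<le> l" using pl dpath_mono[OF _ sub1 sp(9)] by blast
        show "\<forall>p. dpath V1 E1 p \<and> last p = r \<longrightarrow> length p - 1 \<le> h" using ph dpath_mono[OF _ sub1 sp(9)] by blast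
        show "h \<le> l" by (rule hl)
      qed
      have ph2: "\<forall>p. dpath V2 E2 p \<and> last p = w \<longrightarrow> length p - 1 \<le> h - 1"
      proof (intro allI impI)
        fix p assume p: "dpath V2 E2 p \<and> last p = w"
        then have "dpath V E p" using dpath_mono[OF _ sub2 sp(8)] by blast
        then have "dpath V E (p @ [r])" using dpath_snoc p wr rV by (metis)
        moreover have "last (p @ [r]) = r" by simp
        ultimately have "length (p @ [r]) - 1 \<le> h" using ph by blast
        then show "length p - 1 \<le> h - 1" by simp
      qed
      have IH2: "\<exists>px py g L W \<mu> \<nu>. good V2 E2 w d l (h - 1) px py g L W \<mu> \<nu>"
      proof (rule less.hyps[OF c2 sp(1) sp(6)])
        show "\<forall>v\<in>V2. vdegree E2 v \<le> d"
        proof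
          fix v assume "v \<in> V2"
          then show "vdegree E2 v \<le> d" using vdeg_mono[OF fE sp(8), of v] deg sub2 by force
        qed
        show "2 \<le> d" by (rule d2)
        show "\<forall>p. dpath V2 E2 p \<longrightarrow> length p - 1 \<le> l" using pl dpath_mono[OF _ sub2 sp(8)] by blast
        show "\<forall>p. dpath V2 E2 p \<and> last p = w \<longrightarrow> length p - 1 \<le> h - 1" by (rule ph2)
        show "h - 1 \<le> l" using hl by simp
      qed
      from IH1 obtain px1 py1 g1 L1 W1 \<mu>1 \<nu>1 where G1: "good V1 E1 r d l h px1 py1 g1 L1 W1 \<mu>1 \<nu>1" by blast
      from IH2 obtain px2 py2 g2 L2 W2 \<mu>2 \<nu>2 where G2: "good V2 E2 w d l (h - 1) px2 py2 g2 L2 W2 \<mu>2 \<nu>2" by blast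
      have inE: "{e\<in>E. snd e = r} = insert (w, r) {e\<in>E1. snd e = r}"
        using sp(5,11,3,7) by auto
      have indE: "indeg E r = indeg E1 r + 1"
      proof -
        have "finite {e\<in>E1. snd e = r}" using fE sp(9) by (metis (no_types, lifting) finite_subset mem_Collect_eq subsetI)
        moreover have "(w, r) \<notin> {e\<in>E1. snd e = r}" using sp(10) by auto
        ultimately show ?thesis unfolding indeg_def inE by simp
      qed
      have ind1: "indeg E1 r \<le> d - 1" using indE indeg_le_vdeg[OF fE, of r] deg rV by force
      have ind2: "indeg E2 w \<le> d - 1"
        using indeg_sub_le[OF fE sp(8) wr _ , of w] sp(10) deg sp(4,6) by force
      have L1b: "L1 \<le> indeg E1 r * (1 + Lam d (h - 1))" using G1 unfolding good_def by blast
      have L2b: "L2 \<le> indeg E2 w * (1 + Lam d (h - 1 - 1))" using G2 unfolding good_def by blast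
      have L2L: "L2 \<le> Lam d (h - 1)"
      proof (rule Lam_step[OF L2b ind2])
        assume "0 < indeg E2 w"
        then have "{e\<in>E2. snd e = w} \<noteq> {}" unfolding indeg_def by (metis card.empty less_irrefl)
        then obtain x where x: "(x, w) \<in> E2" by auto
        have "x \<in> V2" "w \<in> V2" using x sp(11) by auto
        then have "dpath V2 E2 [x, w]" by (rule dpath_edge[OF x])
        then have "length [x, w] - 1 \<le> h - 1" using ph2[rule_format, of "[x, w]"] by simp
        then show "1 \<le> h - 1" by simp
      qed
      from G1 have G1u: "upward_layered_drawing V1 E1 px1 py1 g1" "onv V1 E1 px1 py1 g1" "px1 r = 0" "py1 r = 0" "\<mu>1 > 0"
        and G1R: "\<forall>p\<in>dset V1 E1 px1 py1 g1. 0 \<le> fst p \<and> fst p \<le> W1 \<and> (fst p = 0 \<longrightarrow> p = (0,0)) \<and>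
               - real L1 \<le> snd p \<and> (snd p < 0 \<longrightarrow> \<mu>1 * (- snd p) \<le> fst p)"
        and G1s: "\<forall>e\<in>E1. py1 (snd e) - py1 (fst e) \<le> int (Lam d l + 1)"
        unfolding good_def by auto
      from G2 have G2u: "upward_layered_drawing V2 E2 px2 py2 g2" "onv V2 E2 px2 py2 g2" "px2 w = 0" "py2 w = 0"
        and G2R: "\<forall>p\<in>dset V2 E2 px2 py2 g2. 0 \<le> fst p \<and> fst p \<le> W2 \<and> (fst p = 0 \<longrightarrow> p = (0,0)) \<and>
               - real L2 \<le> snd p"
        and G2s: "\<forall>e\<in>E2. py2 (snd e) - py2 (fst e) \<le> int (Lam d l + 1)"
        unfolding good_def by auto
      have disj12: "V1 \<inter> V2 = {}" using sp(3) by blast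
      from step_down_geo[OF G1u(1,2) sp(7) G1u(3,4,5) G1R G2u(1,2) sp(6) G2u(3,4) G2R disj12 sp(12) sp(11)]
      obtain px py g W \<mu> where
        ST1: "upward_layered_drawing (V1 \<union> V2) (insert (w,r) (E1 \<union> E2)) px py g"
        and ST2: "onv (V1 \<union> V2) (insert (w,r) (E1 \<union> E2)) px py g"
        and ST3: "px r = 0" "py r = 0" "\<mu> > 0"
        and ST4: "\<forall>p\<in>dset (V1 \<union> V2) (insert (w,r) (E1 \<union> E2)) px py g. 0 \<le> fst p \<and> fst p \<le> W \<and>
          (fst p = 0 \<longrightarrow> p = (0,0)) \<and> - real (L1 + 1 + L2) \<le> snd p \<and> (snd p < 0 \<longrightarrow> \<mu> * (- snd p) \<le> fst p)"
        and ST5: "\<forall>v\<in>V1. py v = py1 v" and ST6: "\<forall>v\<in>V2. py v = py2 v - int (L1 + 1)"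
        by blast
      have VV: "V1 \<union> V2 = V" using sp(4) by blast
      have EE: "insert (w,r) (E1 \<union> E2) = E" using sp(5) by blast
      have L1L: "L1 \<le> Lam d h" by (rule Lam_step[OF L1b ind1]) (use h1 in simp)
      have Lmono: "Lam d h \<le> Lam d l" by (rule Lam_mono[OF hl d2])
      have GD: "good V E r d l h px py g (L1 + 1 + L2) W \<mu> 1"
        unfolding good_def
      proof (intro conjI)
        show "upward_layered_drawing V E px py g" using ST1 unfolding VV EE .
        show "onv V E px py g" using ST2 unfolding VV EE .
        show "px r = 0" "py r = 0" "\<mu> > 0" using ST3 by auto
        show "(0::real) < 1" by simp
        show "\<forall>p\<in>dset V E px py g. 0 \<le> fst p \<and> fst p \<le> W \<and> (fst p = 0 \<longrightarrow> p = (0, 0)) \<and>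
          - real (L1 + 1 + L2) \<le> snd p \<and> (snd p < 0 \<longrightarrow> \<mu> * - snd p \<le> fst p) \<and> (indeg E r = 0 \<longrightarrow> 1 * fst p \<le> snd p)"
          using ST4 indE unfolding VV EE by simp
        have "indeg E r * (1 + Lam d (h - 1)) = indeg E1 r * (1 + Lam d (h - 1)) + 1 + Lam d (h - 1)"
          using indE by (simp add: algebra_simps)
        then show "L1 + 1 + L2 \<le> indeg E r * (1 + Lam d (h - 1))" using L1b L2L by linarith
        show "\<forall>e\<in>E. py (snd e) - py (fst e) \<le> int (Lam d l + 1)"
        proof
          fix e assume e: "e \<in> E"
          then have "e = (w, r) \<or> e \<in> E1 \<or> e \<in> E2" using sp(5) by blast
          then show "py (snd e) - py (fst e) \<le> int (Lam d l + 1)"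
          proof (elim disjE)
            assume ew: "e = (w, r)"
            have "py w = - int (L1 + 1)" using ST6 sp(6) G2u(4) by simp
            then have "py (snd e) - py (fst e) = int (L1 + 1)" using ew ST3 by simp
            then show ?thesis using L1L Lmono by linarith
          next
            assume e1: "e \<in> E1"
            then have "fst e \<in> V1" "snd e \<in> V1" using sp(12) by auto
            then show ?thesis using ST5 G1s e1 by simp
          next
            assume e2: "e \<in> E2"
            then have "fst e \<in> V2" "snd e \<in> V2" using sp(11) by auto
            then show ?thesis using ST6 G2s e2 by simp
          qed
        qed
      qed
      show ?thesis
        apply (rule exI)+
        apply (rule GD)
        done
    next
      case False
      then have noin: "\<And>x. (x, r) \<notin> E" by blast
      from inc False obtain u where ru: "(r, u) \<in> E" by blast
      from split_tree_ex[OF T ru] obtain V1 V2 E1 E2 where spc: "directed_tree V1 E1 \<and> directed_tree V2 E2 \<and> V1 \<inter> V2 = {} \<and> V = V1 \<union> V2 \<and>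
        E = insert (r, u) (E1 \<union> E2) \<and> r \<in> V1 \<and> u \<in> V2 \<and> E1 \<subseteq> E \<and> E2 \<subseteq> E \<and> (r, u) \<notin> E1 \<union> E2 \<and>
        E1 \<subseteq> V1 \<times> V1 \<and> E2 \<subseteq> V2 \<times> V2" by blast
      have sp: "directed_tree V1 E1" "directed_tree V2 E2" "V1 \<inter> V2 = {}" "V = V1 \<union> V2"
        "E = insert (r, u) (E1 \<union> E2)" "r \<in> V1" "u \<in> V2" "E1 \<subseteq> E" "E2 \<subseteq> E" "(r, u) \<notin> E1 \<union> E2"
        "E1 \<subseteq> V1 \<times> V1" "E2 \<subseteq> V2 \<times> V2" using spc by blast+
      have sub1: "V1 \<subseteq> V" and sub2: "V2 \<subseteq> V" using sp(4) by blast+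
      have fV1: "finite V1" and fV2: "finite V2" using fV sub1 sub2 finite_subset by blast+
      have cV: "card V = card V1 + card V2" unfolding sp(4) by (rule card_Un_disjoint[OF fV1 fV2 sp(3)])
      have "card V2 > 0" using fV2 sp(7) by (auto simp: card_gt_0_iff)
      then have c1: "card V1 < card V" using cV by linarith
      have "card V1 > 0" using fV1 sp(6) by (auto simp: card_gt_0_iff)
      then have c2: "card V2 < card V" using cV by linarith
      have IH1: "\<exists>px py g L W \<mu> \<nu>. good V1 E1 r d l h px py g L W \<mu> \<nu>"
      proof (rule less.hyps[OF c1 sp(1) sp(6)])
        show "\<forall>v\<in>V1. vdegree E1 v \<le> d"
        proof
          fix v assume "v \<in> V1"
          then show "vdegree E1 v \<le> d" using vdeg_mono[OF fE sp(8), of v] deg sub1 by force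
        qed
        show "2 \<le> d" by (rule d2)
        show "\<forall>p. dpath V1 E1 p \<longrightarrow> length p - 1 \<le> l" using pl dpath_mono[OF _ sub1 sp(8)] by blast
        show "\<forall>p. dpath V1 E1 p \<and> last p = r \<longrightarrow> length p - 1 \<le> h" using ph dpath_mono[OF _ sub1 sp(8)] by blast
        show "h \<le> l" by (rule hl)
      qed
      have pl2: "\<forall>p. dpath V2 E2 p \<longrightarrow> length p - 1 \<le> l" using pl dpath_mono[OF _ sub2 sp(9)] by blast
      have IH2: "\<exists>px py g L W \<mu> \<nu>. good V2 E2 u d l l px py g L W \<mu> \<nu>"
      proof (rule less.hyps[OF c2 sp(2) sp(7)])
        show "\<forall>v\<in>V2. vdegree E2 v \<le> d"
        proof
          fix v assume "v \<in> V2"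
          then show "vdegree E2 v \<le> d" using vdeg_mono[OF fE sp(9), of v] deg sub2 by force
        qed
        show "2 \<le> d" by (rule d2)
        show "\<forall>p. dpath V2 E2 p \<longrightarrow> length p - 1 \<le> l" by (rule pl2)
        show "\<forall>p. dpath V2 E2 p \<and> last p = u \<longrightarrow> length p - 1 \<le> l" using pl2 by blast
        show "l \<le> l" by simp
      qed
      from IH1 obtain px1 py1 g1 L1 W1 \<mu>1 \<nu>1 where G1: "good V1 E1 r d l h px1 py1 g1 L1 W1 \<mu>1 \<nu>1" by blast
      from IH2 obtain px2 py2 g2 L2 W2 \<mu>2 \<nu>2 where G2: "good V2 E2 u d l l px2 py2 g2 L2 W2 \<mu>2 \<nu>2" by blast
      have emp: "{e\<in>E. snd e = r} = {}"
      proof (rule ccontr)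
        assume "{e\<in>E. snd e = r} \<noteq> {}"
        then obtain e where e: "e \<in> E" "snd e = r" by blast
        then have "(fst e, r) \<in> E" by (metis prod.collapse)
        then show False using noin by blast
      qed
      have indE: "indeg E r = 0" unfolding indeg_def emp by simp
      have "{e\<in>E1. snd e = r} = {}" using emp sp(8) by blast
      then have indE1: "indeg E1 r = 0" unfolding indeg_def by (metis card.empty)
      have ind2: "indeg E2 u \<le> d - 1"
      proof -
        have "indeg E2 u + 1 \<le> vdegree E u" by (rule indeg_sub_le[OF fE sp(9) ru]) (use sp(10) in auto)
        moreover have "vdegree E u \<le> d" using deg sub2 sp(7) by blast
        ultimately show ?thesis by linarith
      qed
      from G1 have G1u: "upward_layered_drawing V1 E1 px1 py1 g1" "onv V1 E1 px1 py1 g1" "px1 r = 0" "py1 r = 0" "\<nu>1 > 0"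
        and G1R: "\<forall>p\<in>dset V1 E1 px1 py1 g1. 0 \<le> fst p \<and> fst p \<le> W1 \<and> (fst p = 0 \<longrightarrow> p = (0,0)) \<and>
               \<nu>1 * fst p \<le> snd p"
        and G1s: "\<forall>e\<in>E1. py1 (snd e) - py1 (fst e) \<le> int (Lam d l + 1)"
        unfolding good_def using indE1 by auto
      from G2 have G2u: "upward_layered_drawing V2 E2 px2 py2 g2" "onv V2 E2 px2 py2 g2" "px2 u = 0" "py2 u = 0"
        and G2R: "\<forall>p\<in>dset V2 E2 px2 py2 g2. 0 \<le> fst p \<and> fst p \<le> W2 \<and> (fst p = 0 \<longrightarrow> p = (0,0)) \<and>
               - real L2 \<le> snd p"
        and G2s: "\<forall>e\<in>E2. py2 (snd e) - py2 (fst e) \<le> int (Lam d l + 1)"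
        and L2b: "L2 \<le> indeg E2 u * (1 + Lam d (l - 1))"
        unfolding good_def by auto
      have L2L: "L2 \<le> Lam d l"
      proof (rule Lam_step[OF L2b ind2])
        assume "0 < indeg E2 u"
        then have "{e\<in>E2. snd e = u} \<noteq> {}" unfolding indeg_def by (metis card.empty less_irrefl)
        then obtain x where x: "(x, u) \<in> E2" by auto
        have "x \<in> V2" "u \<in> V2" using x sp(12) by auto
        then have "dpath V2 E2 [x, u]" by (rule dpath_edge[OF x])
        then have "length [x, u] - 1 \<le> l" using pl2 by blast
        then show "1 \<le> l" by simp
      qed
      from step_up_geo[OF G1u(1,2) sp(6) G1u(3,4,5) G1R G2u(1,2) sp(7) G2u(3,4) G2R sp(3) sp(11) sp(12)]
      obtain px py g W \<nu> where
        ST1: "upward_layered_drawing (V1 \<union> V2) (insert (r,u) (E1 \<union> E2)) px py g"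
        and ST2: "onv (V1 \<union> V2) (insert (r,u) (E1 \<union> E2)) px py g"
        and ST3: "px r = 0" "py r = 0" "\<nu> > 0"
        and ST4: "\<forall>p\<in>dset (V1 \<union> V2) (insert (r,u) (E1 \<union> E2)) px py g. 0 \<le> fst p \<and> fst p \<le> W \<and>
          (fst p = 0 \<longrightarrow> p = (0,0)) \<and> \<nu> * fst p \<le> snd p"
        and ST5: "\<forall>v\<in>V1. py v = py1 v" and ST6: "\<forall>v\<in>V2. py v = py2 v + int (L2 + 1)"
        by blast
      have VV: "V1 \<union> V2 = V" using sp(4) by blast
      have EE: "insert (r,u) (E1 \<union> E2) = E" using sp(5) by blast
      have reg: "0 \<le> fst p \<and> fst p \<le> W \<and> (fst p = 0 \<longrightarrow> p = (0, 0)) \<and>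
          - real 0 \<le> snd p \<and> (snd p < 0 \<longrightarrow> 1 * - snd p \<le> fst p) \<and> (indeg E r = 0 \<longrightarrow> \<nu> * fst p \<le> snd p)"
        if p: "p \<in> dset V E px py g" for p
      proof -
        have A: "0 \<le> fst p" "fst p \<le> W" "fst p = 0 \<longrightarrow> p = (0,0)" "\<nu> * fst p \<le> snd p"
          using ST4 p unfolding VV EE by auto
        have "0 \<le> \<nu> * fst p" using A(1) ST3(3) by simp
        then have "0 \<le> snd p" using A(4) by linarith
        then show ?thesis using A by simp
      qed
      have GD: "good V E r d l h px py g 0 W 1 \<nu>"
        unfolding good_def
      proof (intro conjI)
        show "upward_layered_drawing V E px py g" using ST1 unfolding VV EE .
        show "onv V E px py g" using ST2 unfolding VV EE .
        show "px r = 0" "py r = 0" "\<nu> > 0" using ST3 by auto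
        show "(0::real) < 1" by simp
        show "\<forall>p\<in>dset V E px py g. 0 \<le> fst p \<and> fst p \<le> W \<and> (fst p = 0 \<longrightarrow> p = (0, 0)) \<and>
          - real 0 \<le> snd p \<and> (snd p < 0 \<longrightarrow> 1 * - snd p \<le> fst p) \<and> (indeg E r = 0 \<longrightarrow> \<nu> * fst p \<le> snd p)"
          using reg by blast
        show "0 \<le> indeg E r * (1 + Lam d (h - 1))" by simp
        show "\<forall>e\<in>E. py (snd e) - py (fst e) \<le> int (Lam d l + 1)"
        proof
          fix e assume e: "e \<in> E"
          then have "e = (r, u) \<or> e \<in> E1 \<or> e \<in> E2" using sp(5) by blast
          then show "py (snd e) - py (fst e) \<le> int (Lam d l + 1)"
          proof (elim disjE)
            assume eu: "e = (r, u)"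
            have "py u = int (L2 + 1)" using ST6 sp(7) G2u(4) by simp
            then have "py (snd e) - py (fst e) = int (L2 + 1)" using eu ST3 by simp
            then show ?thesis using L2L by linarith
          next
            assume e1: "e \<in> E1"
            then have "fst e \<in> V1" "snd e \<in> V1" using sp(11) by auto
            then show ?thesis using ST5 G1s e1 by simp
          next
            assume e2: "e \<in> E2"
            then have "fst e \<in> V2" "snd e \<in> V2" using sp(12) by auto
            then show ?thesis using ST6 G2s e2 by simp
          qed
        qed
      qed
      show ?thesis
        apply (rule exI)+
        apply (rule GD)
        done
    qed
  qed
qed

lemma dpath_trancl:
  assumes "dpath V E p" "i < j" "j < length p"
  shows "(p ! i, p ! j) \<in> E\<^sup>+"
  using assms(2,3)
proof (induction j)
  case 0 then show ?case by simp
next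
  case (Suc j)
  have e: "(p ! j, p ! Suc j) \<in> E" using assms(1) Suc.prems(2) unfolding dpath_def by auto
  show ?case
  proof (cases "i = j")
    case True then show ?thesis using e by auto
  next
    case False
    then have "(p ! i, p ! j) \<in> E\<^sup>+" using Suc by simp
    then show ?thesis using e by (rule trancl_into_trancl)
  qed
qed

lemma dpath_len:
  assumes T: "directed_tree V E" and p: "dpath V E p"
  shows "length p \<le> card V"
proof (rule ccontr)
  assume "\<not> length p \<le> card V"
  then have lt: "card V < length p" by simp
  have fV: "finite V" and acyc: "acyclic E" using T unfolding directed_tree_def by auto
  have "set p \<subseteq> V" using p unfolding dpath_def by auto
  then have "card (set p) \<le> card V" using fV by (rule card_mono[rotated])
  then have "\<not> distinct p" using lt distinct_card by fastforce
  then obtain i j where ij: "i < length p" "j < length p" "i \<noteq> j" "p ! i = p ! j"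
    by (auto simp: distinct_conv_nth)
  show False
  proof (cases "i < j")
    case True
    then have "(p ! i, p ! j) \<in> E\<^sup>+" using dpath_trancl[OF p] ij by blast
    then show False using acyc ij(4) unfolding acyclic_def by auto
  next
    case False
    then have "j < i" using ij(3) by simp
    then have "(p ! j, p ! i) \<in> E\<^sup>+" using dpath_trancl[OF p] ij by blast
    then show False using acyc ij(4) unfolding acyclic_def by auto
  qed
qed

theorem mainTheorem9:
  "\<exists>c::real. c > 0 \<and>
     (\<forall>(V::nat set) E. directed_tree V E \<longrightarrow> graph_degree V E \<ge> 3 \<longrightarrow>
        longest_path_length V E \<ge> 1 \<longrightarrow>
        real (upward_span V E) \<le> c * (real (graph_degree V E) - 1) ^ longest_path_length V E)"
proof (rule exI[of _ 3], intro conjI allI impI)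
  show "(0::real) < 3" by simp
  fix V :: "nat set" and E
  assume T: "directed_tree V E" and d3: "graph_degree V E \<ge> 3" and l1: "longest_path_length V E \<ge> 1"
  define d where "d = graph_degree V E"
  define l where "l = longest_path_length V E"
  from T have fV: "finite V" and Vne: "V \<noteq> {}" and EV: "E \<subseteq> V \<times> V"
    unfolding directed_tree_def by auto
  have "finite (V \<times> V)" using fV by simp
  then have fE: "finite E" using EV finite_subset by blast
  obtain r where rV: "r \<in> V" using Vne by blast
  have deg: "\<forall>v\<in>V. vdegree E v \<le> d"
    unfolding d_def graph_degree_def using fV by simp
  define S where "S = {length p - 1 | p. dpath V E p}"
  have "S \<subseteq> {..card V}" unfolding S_def using dpath_len[OF T] by fastforce
  then have fS: "finite S" using finite_subset by blast
  have pl: "\<forall>p. dpath V E p \<longrightarrow> length p - 1 \<le> l"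
  proof (intro allI impI)
    fix p assume "dpath V E p"
    then have "length p - 1 \<in> S" unfolding S_def by blast
    then show "length p - 1 \<le> l" unfolding l_def longest_path_length_def S_def[symmetric] using fS by simp
  qed
  have pl2: "\<forall>p. dpath V E p \<and> last p = r \<longrightarrow> length p - 1 \<le> l" using pl by blast
  have d2: "2 \<le> d" using d3 unfolding d_def by simp
  obtain px py g L W \<mu> \<nu> where G: "good V E r d l l px py g L W \<mu> \<nu>"
    using main_lemma[OF T rV deg d2 pl pl2 le_refl] by blast
  have D: "upward_layered_drawing V E px py g" and spans: "\<forall>e\<in>E. py (snd e) - py (fst e) \<le> int (Lam d l + 1)"
    using G unfolding good_def by auto
  have pos: "py u < py v" if uv: "(u, v) \<in> E" for u v
  proof -
    from D uv have "pathstart (g (u, v)) = Pt px py u" "pathfinish (g (u, v)) = Pt px py v"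
      "strict_mono_on {0..1} (\<lambda>t. snd (g (u, v) t))" unfolding uld_Pt by auto
    then have a: "snd (g (u, v) 0) = py u" "snd (g (u, v) 1) = py v" and m: "strict_mono_on {0..1} (\<lambda>t. snd (g (u, v) t))"
      unfolding pathstart_def pathfinish_def Pt_def by auto
    have "snd (g (u, v) 0) < snd (g (u, v) 1)" by (rule strict_mono_onD[OF m]) auto
    then show ?thesis using a by simp
  qed
  have Sne: "S \<noteq> {}" unfolding S_def using rV by (auto simp: dpath_def intro!: exI[of _ "[r]"])
  have "l \<in> S" unfolding l_def longest_path_length_def S_def[symmetric] using fS Sne by (rule Max_in)
  then obtain p where p: "dpath V E p" "length p - 1 = l" unfolding S_def by blast
  then have "1 < length p" using l1 unfolding l_def by simp
  then have "(p ! 0, p ! 1) \<in> E" using p(1) unfolding dpath_def by auto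
  then have Ene: "E \<noteq> {}" by blast
  define f where "f = (\<lambda>(u, v). py v - py u)"
  have fe: "f e = py (snd e) - py (fst e)" for e unfolding f_def by (cases e) simp
  define ds where "ds = drawing_span E py"
  have ds_def2: "ds = Max (f ` E)" unfolding ds_def drawing_span_def f_def by simp
  have fin: "finite (f ` E)" using fE by simp
  have ne: "f ` E \<noteq> {}" using Ene by simp
  have ds_le: "ds \<le> int (Lam d l + 1)" unfolding ds_def2 using fin ne spans fe by (simp add: Max_le_iff)
  obtain e0 where e0: "e0 \<in> E" using Ene by blast
  have "f e0 > 0" using pos[of "fst e0" "snd e0"] e0 fe by simp
  moreover have "f e0 \<le> ds" unfolding ds_def2 using fin e0 by simp
  ultimately have ds0: "0 \<le> ds" by simp
  have "upward_layered_drawing V E px py g \<and> drawing_span E py = int (nat ds)" using D ds0 unfolding ds_def by simp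
  then have "upward_span V E \<le> nat ds" unfolding upward_span_def by (intro Least_le) blast
  then have "real (upward_span V E) \<le> real (Lam d l + 1)" using ds_le ds0 by linarith
  also have "\<dots> \<le> 2 * real ((d - 1) ^ l)"
  proof -
    have "Lam d l + 2 \<le> 2 * (d - 1) ^ l" using d3 unfolding d_def by (intro Lam_bound) simp
    then have "Lam d l + 1 \<le> 2 * (d - 1) ^ l" by simp
    then show ?thesis by (metis of_nat_le_iff of_nat_mult of_nat_numeral)
  qed
  also have "\<dots> \<le> 3 * (real d - 1) ^ l"
  proof -
    have "real ((d - 1) ^ l) = (real d - 1) ^ l" using d2 by (simp add: of_nat_diff)
    moreover have "0 \<le> (real d - 1) ^ l" using d2 by simp
    ultimately show ?thesis by simp
  qed
  finally show "real (upward_span V E) \<le> 3 * (real (graph_degree V E) - 1) ^ longest_path_length V E"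
    unfolding d_def l_def .
qed

end
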